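(* Let $\vec p$ be a no-signalling box. (i) For any real coefficients $B(a,b|x,y)$ defining the linear functional $B(\vec q)=\sum_{a,b,x,y}B(a,b|x,y)q(a,b|x,y)$ and satisfying $|B(\vec p_{\mathcal{L}})|\le1$ for all $\vec p_{\mathcal{L}}\in\mathcal{L}$, setting $B^{\mathcal{Q}_{\max}}:=\sup_{\vec p_{\mathcal{Q}}\in\mathcal{Q}}|B(\vec p_{\mathcal{Q}})|$, one has $$\frac{|B(\vec p)|/B^{\mathcal{Q}_{\max}}-1}{2}\le r_{\mathbb{D}}(\vec p),$$ equivalently $\|O\|_1\ge|B(\vec p)|/B^{\mathcal{Q}_{\max}}$ for every pseudo-state $O$ with $O\rightarrow\vec p$. (ii) Setting $b_{\mathcal{L}}^{\mathcal{Q}_{\max}}:=\sup_{\vec p_{\mathcal{Q}}\in\mathcal{Q}}b_{\mathcal{L}}(\vec p_{\mathcal{Q}})$, one has $$\frac{b_{\mathcal{L}}(\vec p)/b_{\mathcal{L}}^{\mathcal{Q}_{\max}}-1}{2}\le r_{\mathbb{D}}(\vec p),$$ equivalently $\|O\|_1\ge b_{\mathcal{L}}(\vec p)/b_{\mathcal{L}}^{\mathcal{Q}_{\max}}$ for every $O\rightarrow\vec p$.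
   Context: Boxes $\vec p=(p(a,b|x,y))$ over fixed finite alphabets; $\mathcal{L}$ is the set of local boxes $\sum_iq_ip_A^i(a|x)p_B^i(b|y)$ (convex combinations of products of local conditional distributions); $\mathcal{Q}$ is the set of boxes $\mathrm{Tr}(M_{a|x}\otimes N_{b|y}\rho)$ with $\rho$ a density operator on a finite-dimensional bipartite space and local POVMs. $b_{\mathcal{L}}(\vec p):=\min\{\sum_i|c_i|:\ \vec p=\sum_ic_i\vec p^{\,i},\ \vec p^{\,i}\in\mathcal{L},\ c_i\in\mathbb{R},\ \sum_ic_i=1\}$. A pseudo-state is a Hermitian unit-trace operator on a finite-dimensional bipartite space; $O\rightarrow\vec p$ means $p(a,b|x,y)=\mathrm{Tr}(M_{a|x}\otimes N_{b|y}O)$ for some local POVMs. $r_{\mathbb{D}}(O):=\min\{t\ge0:\exists\rho'\text{ density op.},\ (O+t\rho')/(1+t)\text{ is a density operator}\}$ and $r_{\mathbb{D}}(\vec p):=\inf_{O\rightarrow\vec p}r_{\mathbb{D}}(O)$. $\|\cdot\|_1$ is the trace norm. *)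

theory Defs
  imports "Jordan_Normal_Form.Char_Poly"
begin

text \<open>A box is p(a,b|x,y), written p a b x y, with outputs a::'a, b::'b and inputs x::'x, y::'y,
  all ranging over finite types.\<close>

definition no_signalling :: "('a::finite \<Rightarrow> 'b::finite \<Rightarrow> 'x::finite \<Rightarrow> 'y::finite \<Rightarrow> real) \<Rightarrow> bool" where
  "no_signalling p \<longleftrightarrow>
     (\<forall>a b x y. 0 \<le> p a b x y) \<and>
     (\<forall>x y. (\<Sum>a\<in>UNIV. \<Sum>b\<in>UNIV. p a b x y) = 1) \<and>
     (\<forall>a x y y'. (\<Sum>b\<in>UNIV. p a b x y) = (\<Sum>b\<in>UNIV. p a b x y')) \<and>
     (\<forall>b x x' y. (\<Sum>a\<in>UNIV. p a b x y) = (\<Sum>a\<in>UNIV. p a b x' y))"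

text \<open>Local conditional distribution P(a|x), written P x a.\<close>
definition cond_dist :: "('x::finite \<Rightarrow> 'a::finite \<Rightarrow> real) \<Rightarrow> bool" where
  "cond_dist P \<longleftrightarrow> (\<forall>x a. 0 \<le> P x a) \<and> (\<forall>x. (\<Sum>a\<in>UNIV. P x a) = 1)"

definition local_box :: "('a::finite \<Rightarrow> 'b::finite \<Rightarrow> 'x::finite \<Rightarrow> 'y::finite \<Rightarrow> real) \<Rightarrow> bool" where
  "local_box p \<longleftrightarrow>
     (\<exists>(n::nat) (q::nat \<Rightarrow> real) (PA::nat \<Rightarrow> 'x \<Rightarrow> 'a \<Rightarrow> real) (PB::nat \<Rightarrow> 'y \<Rightarrow> 'b \<Rightarrow> real).
        (\<forall>i<n. 0 \<le> q i) \<and> (\<Sum>i<n. q i) = 1 \<and>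
        (\<forall>i<n. cond_dist (PA i) \<and> cond_dist (PB i)) \<and>
        (\<forall>a b x y. p a b x y = (\<Sum>i<n. q i * PA i x a * PB i y b)))"

definition adj :: "complex mat \<Rightarrow> complex mat" where
  "adj A = mat (dim_col A) (dim_row A) (\<lambda>(i,j). cnj (A $$ (j,i)))"

definition mtrace :: "complex mat \<Rightarrow> complex" where
  "mtrace A = (\<Sum>i<dim_row A. A $$ (i,i))"

definition hermitian :: "nat \<Rightarrow> complex mat \<Rightarrow> bool" where
  "hermitian n A \<longleftrightarrow> A \<in> carrier_mat n n \<and> adj A = A"

definition psd :: "nat \<Rightarrow> complex mat \<Rightarrow> bool" where
  "psd n A \<longleftrightarrow> hermitian n A \<and>
     (\<forall>v::nat \<Rightarrow> complex. 0 \<le> Re (\<Sum>i<n. \<Sum>j<n. cnj (v i) * A $$ (i,j) * v j))"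

definition density :: "nat \<Rightarrow> complex mat \<Rightarrow> bool" where
  "density n \<rho> \<longleftrightarrow> psd n \<rho> \<and> mtrace \<rho> = 1"

definition pseudo_state :: "nat \<Rightarrow> complex mat \<Rightarrow> bool" where
  "pseudo_state n Op \<longleftrightarrow> hermitian n Op \<and> mtrace Op = 1"

definition kron :: "nat \<Rightarrow> nat \<Rightarrow> complex mat \<Rightarrow> complex mat \<Rightarrow> complex mat" where
  "kron dA dB A B = mat (dA * dB) (dA * dB)
     (\<lambda>(i,j). A $$ (i div dB, j div dB) * B $$ (i mod dB, j mod dB))"

definition povm :: "nat \<Rightarrow> ('x::finite \<Rightarrow> 'a::finite \<Rightarrow> complex mat) \<Rightarrow> bool" where
  "povm d M \<longleftrightarrow> (\<forall>x a. psd d (M x a)) \<and>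
     (\<forall>x i j. i < d \<longrightarrow> j < d \<longrightarrow> (\<Sum>a\<in>UNIV. M x a $$ (i,j)) = (if i = j then 1 else 0))"

text \<open>Op \<rightarrow> p on the bipartite space C^dA \<otimes> C^dB.\<close>
definition realizes :: "nat \<Rightarrow> nat \<Rightarrow> complex mat \<Rightarrow>
    ('a::finite \<Rightarrow> 'b::finite \<Rightarrow> 'x::finite \<Rightarrow> 'y::finite \<Rightarrow> real) \<Rightarrow> bool" where
  "realizes dA dB Op p \<longleftrightarrow>
     (\<exists>(M::'x \<Rightarrow> 'a \<Rightarrow> complex mat) (N::'y \<Rightarrow> 'b \<Rightarrow> complex mat). povm dA M \<and> povm dB N \<and>
        (\<forall>a b x y. complex_of_real (p a b x y) = mtrace (kron dA dB (M x a) (N y b) * Op)))"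

definition quantum_box :: "('a::finite \<Rightarrow> 'b::finite \<Rightarrow> 'x::finite \<Rightarrow> 'y::finite \<Rightarrow> real) \<Rightarrow> bool" where
  "quantum_box p \<longleftrightarrow> (\<exists>dA dB \<rho>. density (dA * dB) \<rho> \<and> realizes dA dB \<rho> p)"

definition b_L :: "('a::finite \<Rightarrow> 'b::finite \<Rightarrow> 'x::finite \<Rightarrow> 'y::finite \<Rightarrow> real) \<Rightarrow> real" where
  "b_L p = Inf {(\<Sum>i<n. \<bar>c i\<bar>) | (n::nat) c ps.
      (\<forall>i<n. local_box (ps i)) \<and> (\<Sum>i<n. c i) = 1 \<and>
      (\<forall>a b x y. p a b x y = (\<Sum>i<n. c i * ps i a b x y))}"

definition r_D_op :: "nat \<Rightarrow> complex mat \<Rightarrow> real" where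
  "r_D_op n Op = Inf {t. 0 \<le> t \<and>
      (\<exists>\<rho>'. density n \<rho>' \<and> density n ((1 / (1 + complex_of_real t)) \<cdot>\<^sub>m (Op + complex_of_real t \<cdot>\<^sub>m \<rho>')))}"

definition r_D_box :: "('a::finite \<Rightarrow> 'b::finite \<Rightarrow> 'x::finite \<Rightarrow> 'y::finite \<Rightarrow> real) \<Rightarrow> real" where
  "r_D_box p = Inf {r_D_op (dA * dB) Op | dA dB Op. pseudo_state (dA * dB) Op \<and> realizes dA dB Op p}"

text \<open>Trace norm: sum of the singular values, i.e. of the square roots of the eigenvalues
  (with multiplicity) of Op^* Op.\<close>
definition trace_norm :: "complex mat \<Rightarrow> real" where
  "trace_norm Op = sum_mset (image_mset (\<lambda>z. sqrt (Re z)) (proots (char_poly (adj Op * Op))))"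

definition Bval :: "('a::finite \<Rightarrow> 'b::finite \<Rightarrow> 'x::finite \<Rightarrow> 'y::finite \<Rightarrow> real) \<Rightarrow>
    ('a \<Rightarrow> 'b \<Rightarrow> 'x \<Rightarrow> 'y \<Rightarrow> real) \<Rightarrow> real" where
  "Bval B q = (\<Sum>a\<in>UNIV. \<Sum>b\<in>UNIV. \<Sum>x\<in>UNIV. \<Sum>y\<in>UNIV. B a b x y * q a b x y)"

end

theory Submission
  imports Defs "Jordan_Normal_Form.Schur_Decomposition"
begin


lemma adj_carrier[simp]: "A \<in> carrier_mat n m \<Longrightarrow> adj A \<in> carrier_mat m n"
  unfolding adj_def carrier_mat_def by auto

lemma adj_dims[simp]: "dim_row (adj A) = dim_col A" "dim_col (adj A) = dim_row A"
  unfolding adj_def by auto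

lemma adj_index[simp]: "i < dim_col A \<Longrightarrow> j < dim_row A \<Longrightarrow> adj A $$ (i,j) = cnj (A $$ (j,i))"
  unfolding adj_def by auto

lemma adj_adj[simp]: "adj (adj A) = A"
  by (rule eq_matI, auto)

lemma adj_mult: assumes "A \<in> carrier_mat n m" "B \<in> carrier_mat m k"
  shows "adj (A * B) = adj B * adj A"
proof (rule eq_matI)
  fix i j assume ij: "i < dim_row (adj B * adj A)" "j < dim_col (adj B * adj A)"
  then show "adj (A * B) $$ (i, j) = (adj B * adj A) $$ (i, j)"
    using assms by (auto simp: scalar_prod_def row_def col_def mult.commute intro!: sum.cong)
qed (use assms in auto)

lemma adj_one[simp]: "adj (1\<^sub>m n) = 1\<^sub>m n"
  by (rule eq_matI, auto)

lemma adj_zero[simp]: "adj (0\<^sub>m n m) = 0\<^sub>m m n"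
  by (rule eq_matI, auto)

lemma adj_four_block: assumes "A \<in> carrier_mat n1 m1" "B \<in> carrier_mat n1 m2"
  "C \<in> carrier_mat n2 m1" "D \<in> carrier_mat n2 m2"
  shows "adj (four_block_mat A B C D) = four_block_mat (adj A) (adj C) (adj B) (adj D)"
  by (rule eq_matI, insert assms, auto)

definition unitary :: "nat \<Rightarrow> complex mat \<Rightarrow> bool" where
  "unitary n U \<longleftrightarrow> U \<in> carrier_mat n n \<and> adj U * U = 1\<^sub>m n \<and> U * adj U = 1\<^sub>m n"

lemma unitary_mult: assumes "unitary n U" "unitary n V" shows "unitary n (U * V)"
proof -
  have c: "U \<in> carrier_mat n n" "V \<in> carrier_mat n n" "adj U \<in> carrier_mat n n" "adj V \<in> carrier_mat n n"
    using assms unfolding unitary_def by auto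
  have "adj (U * V) * (U * V) = adj V * ((adj U * U) * V)"
    using c by (simp add: adj_mult[OF c(1,2)] assoc_mult_mat[OF c(4) c(3) mult_carrier_mat[OF c(1,2)]]
       assoc_mult_mat[OF c(3) c(1) c(2)])
  also have "\<dots> = 1\<^sub>m n" using assms c unfolding unitary_def by simp
  finally have 1: "adj (U * V) * (U * V) = 1\<^sub>m n" .
  have "(U * V) * adj (U * V) = U * ((V * adj V) * adj U)"
    using c by (simp add: adj_mult[OF c(1,2)] assoc_mult_mat[OF c(1) c(2) mult_carrier_mat[OF c(4,3)]]
       assoc_mult_mat[OF c(2) c(4) c(3)])
  also have "\<dots> = 1\<^sub>m n" using assms c unfolding unitary_def by simp
  finally show ?thesis using 1 c unfolding unitary_def by auto
qed

lemma cscal_smult: assumes "w \<in> carrier_vec n" "w' \<in> carrier_vec n"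
  shows "(a \<cdot>\<^sub>v w) \<bullet>c (b \<cdot>\<^sub>v w') = a * cnj b * (w \<bullet>c w' :: complex)"
  using assms by (simp add: scalar_prod_def sum_distrib_left mult_ac)

lemma cscal_self_real: fixes w :: "complex vec"
  shows "Im (w \<bullet>c w) = 0" "Re (w \<bullet>c w) \<ge> 0"
  using conjugate_square_ge_0_vec[of w] by (auto simp: less_eq_complex_def)

lemma unitary_extend:
  fixes u :: "complex vec"
  assumes u: "u \<in> carrier_vec n" and u1: "u \<bullet>c u = 1"
  shows "\<exists>W. unitary n W \<and> col W 0 = u"
proof -
  interpret cof_vec_space n "TYPE(complex)" .
  have u0: "u \<noteq> 0\<^sub>v n" using u1 u by auto
  have n0: "n \<noteq> 0" using u0 u by auto
  define b where "b = basis_completion u"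
  from basis_completion[OF u u0, folded b_def]
  have dist_b: "distinct b" and indep: "\<not> lin_dep (set b)" and bc: "set b \<subseteq> carrier_vec n"
    and len_b: "length b = n" and hdb: "hd b = u" by auto
  from hdb len_b n0 obtain vs where bv: "b = u # vs" by (cases b, auto)
  define ws where "ws = gram_schmidt n b"
  from gram_schmidt_result[OF bc dist_b indep refl, folded ws_def]
  have wsc: "set ws \<subseteq> carrier_vec n" and orth: "corthogonal ws" and lws: "length ws = n" by (auto simp: len_b)
  have hdws: "hd ws = u" unfolding ws_def bv using gram_schmidt_hd[OF u] by simp
  define nz where "nz w = (complex_of_real (1 / sqrt (Re (w \<bullet>c w)))) \<cdot>\<^sub>v w" for w :: "complex vec"
  define ws' where "ws' = map nz ws"
  have ws'c: "\<And>i. i < n \<Longrightarrow> ws' ! i \<in> carrier_vec n"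
    using wsc lws unfolding ws'_def nz_def by (auto simp: set_conv_nth)
  have on: "ws' ! i \<bullet>c ws' ! j = (if i = j then 1 else 0)" if ij: "i < n" "j < n" for i j
  proof -
    have wi: "ws ! i \<in> carrier_vec n" "ws ! j \<in> carrier_vec n" using wsc lws ij by (auto simp: set_conv_nth)
    have e: "ws' ! i \<bullet>c ws' ! j = complex_of_real (1 / sqrt (Re (ws!i \<bullet>c ws!i)))
       * cnj (complex_of_real (1 / sqrt (Re (ws!j \<bullet>c ws!j)))) * (ws!i \<bullet>c ws!j)"
      unfolding ws'_def nz_def using ij lws by (simp add: cscal_smult[OF wi])
    show ?thesis
    proof (cases "i = j")
      case False thus ?thesis using e orth ij lws by (auto simp: corthogonal_def)
    next
      case True
      have nz0: "ws!i \<bullet>c ws!i \<noteq> 0" using orth ij lws by (auto simp: corthogonal_def)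
      obtain r where r: "ws!i \<bullet>c ws!i = complex_of_real r" "r \<ge> 0"
        using cscal_self_real[of "ws!i"] by (metis complex_eq_iff complex_of_real_def Re_complex_of_real Im_complex_of_real)
      have rp: "r > 0" using nz0 r by auto
      have "complex_of_real (1 / sqrt r) * complex_of_real (1 / sqrt r) * complex_of_real r = 1"
        using rp by (simp flip: of_real_mult)
      then show ?thesis using e True r by simp
    qed
  qed
  define W where "W = mat_of_cols n ws'"
  have Wc: "W \<in> carrier_mat n n" unfolding W_def ws'_def using lws by auto
  have colW: "\<And>j. j < n \<Longrightarrow> col W j = ws' ! j" unfolding W_def using ws'c lws
    by (simp add: ws'_def)
  have 1: "adj W * W = 1\<^sub>m n"
  proof (rule eq_matI)
    fix i j assume "i < dim_row (1\<^sub>m n)" "j < dim_col (1\<^sub>m n)"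
    hence ij: "i < n" "j < n" by auto
    have "(adj W * W) $$ (i,j) = (\<Sum>k<n. cnj (W $$ (k,i)) * W $$ (k,j))"
      using Wc ij by (simp add: scalar_prod_def row_def col_def atLeast0LessThan)
    also have "\<dots> = ws' ! j \<bullet>c ws' ! i"
      using ws'c[OF ij(1)] ws'c[OF ij(2)] ij lws
      by (auto simp: scalar_prod_def atLeast0LessThan mult.commute W_def ws'_def mat_of_cols_index intro!: sum.cong)
    finally show "(adj W * W) $$ (i,j) = 1\<^sub>m n $$ (i,j)" using on ij by auto
  qed (use Wc in auto)
  have 2: "W * adj W = 1\<^sub>m n" using mat_mult_left_right_inverse[OF adj_carrier[OF Wc] Wc 1] .
  have "col W 0 = nz u" using colW[of 0] n0 hdws lws unfolding ws'_def
    by (cases ws, auto)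
  also have "nz u = u" unfolding nz_def u1 by simp
  finally show ?thesis using 1 2 Wc unfolding unitary_def by auto
qed

lemma exists_eigenvalue: fixes A :: "complex mat"
  assumes A: "A \<in> carrier_mat n n" and n: "n > 0"
  shows "\<exists>e. eigenvalue A e"
proof -
  have "degree (char_poly A) = n" using degree_monic_char_poly[OF A] by auto
  hence "\<not> constant (poly (char_poly A))" using n by (simp add: constant_degree)
  from fundamental_theorem_of_algebra[OF this] obtain z where "poly (char_poly A) z = 0" by auto
  thus ?thesis using eigenvalue_root_char_poly[OF A] by auto
qed

lemma unit_eigenvector: fixes A :: "complex mat"
  assumes A: "A \<in> carrier_mat n n" and n: "n > 0"
  shows "\<exists>e u. u \<in> carrier_vec n \<and> u \<bullet>c u = 1 \<and> A *\<^sub>v u = e \<cdot>\<^sub>v u"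
proof -
  obtain e where ev: "eigenvalue A e" using exists_eigenvalue[OF A n] by auto
  from find_eigenvector[OF A ev] obtain v where "eigenvector A v e" by auto
  hence v: "v \<in> carrier_vec n" "v \<noteq> 0\<^sub>v n" "A *\<^sub>v v = e \<cdot>\<^sub>v v" using A unfolding eigenvector_def by auto
  obtain r where r: "v \<bullet>c v = complex_of_real r" "r \<ge> 0"
    using cscal_self_real[of v] by (metis complex_eq_iff Re_complex_of_real Im_complex_of_real)
  have rp: "r > 0" using r v by (metis conjugate_square_eq_0_vec of_real_0 order_le_less)
  define u where "u = complex_of_real (1 / sqrt r) \<cdot>\<^sub>v v"
  have uc: "u \<in> carrier_vec n" using v unfolding u_def by auto
  have "u \<bullet>c u = complex_of_real (1 / sqrt r) * cnj (complex_of_real (1 / sqrt r)) * (v \<bullet>c v)"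
    unfolding u_def by (rule cscal_smult[OF v(1) v(1)])
  also have "\<dots> = complex_of_real (1 / sqrt r) * complex_of_real (1 / sqrt r) * complex_of_real r"
    using r by (simp only: complex_cnj_complex_of_real)
  also have "\<dots> = 1" using rp by (simp flip: of_real_mult)
  finally have u1: "u \<bullet>c u = 1" .
  have "A *\<^sub>v u = e \<cdot>\<^sub>v u" unfolding u_def using v A
    by (simp add: mult_mat_vec smult_smult_assoc mult.commute)
  with uc u1 show ?thesis by blast
qed

lemma unitary_schur:
  fixes A :: "complex mat"
  assumes "A \<in> carrier_mat n n"
  shows "\<exists>U T. unitary n U \<and> T \<in> carrier_mat n n \<and> upper_triangular T \<and> A = U * T * adj U"
  using assms
proof (induct n arbitrary: A)
  case 0
  have "A = 1\<^sub>m 0 * A * adj (1\<^sub>m 0)" using 0 by (intro eq_matI) auto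
  then show ?case using 0 by (intro exI[of _ "1\<^sub>m 0"] exI[of _ A]) (auto simp: unitary_def upper_triangular_def)
next
  case (Suc m A)
  let ?n = "Suc m"
  have A: "A \<in> carrier_mat ?n ?n" by fact
  obtain e u where u: "u \<in> carrier_vec ?n" "u \<bullet>c u = 1" "A *\<^sub>v u = e \<cdot>\<^sub>v u"
    using unit_eigenvector[OF A] by auto
  obtain W where W: "unitary ?n W" "col W 0 = u" using unitary_extend[OF u(1,2)] by auto
  have Wc: "W \<in> carrier_mat ?n ?n" and aWc: "adj W \<in> carrier_mat ?n ?n"
    and WW: "adj W * W = 1\<^sub>m ?n" "W * adj W = 1\<^sub>m ?n" using W unfolding unitary_def by auto
  define A' where "A' = adj W * A * W"
  have A'c: "A' \<in> carrier_mat ?n ?n" unfolding A'_def using Wc aWc A by auto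
  have AW0: "(A * W) $$ (k,0) = e * W $$ (k,0)" if k: "k < ?n" for k
  proof -
    have "(A * W) $$ (k,0) = row A k \<bullet> col W 0" using A Wc k by (simp add: index_mult_mat)
    also have "\<dots> = (A *\<^sub>v u) $ k" using A k W(2) by simp
    also have "\<dots> = e * u $ k" using u k by simp
    also have "u $ k = W $$ (k,0)" using W(2) Wc k by (metis index_col carrier_matD zero_less_Suc)
    finally show ?thesis .
  qed
  have col0: "A' $$ (i,0) = (if i = 0 then e else 0)" if i: "i < ?n" for i
  proof -
    have "A' = adj W * (A * W)" unfolding A'_def using assoc_mult_mat[OF aWc A Wc] .
    hence "A' $$ (i,0) = (\<Sum>k<?n. adj W $$ (i,k) * (A * W) $$ (k,0))"
      using i Wc A by (simp add: scalar_prod_def row_def col_def atLeast0LessThan)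
    also have "\<dots> = e * (\<Sum>k<?n. adj W $$ (i,k) * W $$ (k,0))"
      unfolding sum_distrib_left by (rule sum.cong) (auto simp: AW0)
    also have "(\<Sum>k<?n. adj W $$ (i,k) * W $$ (k,0)) = (adj W * W) $$ (i,0)"
      using i Wc by (simp add: scalar_prod_def row_def col_def atLeast0LessThan)
    finally show ?thesis using WW i by auto
  qed
  obtain A1 A2 A0 A3 where sp: "split_block A' 1 1 = (A1,A2,A0,A3)" by (cases "split_block A' 1 1") auto
  have dimA': "dim_row A' = 1 + m" "dim_col A' = 1 + m" using A'c by auto
  note blk = split_block[OF sp dimA']
  have A0: "A0 = 0\<^sub>m m 1"
  proof (rule eq_matI)
    fix i j assume "i < dim_row (0\<^sub>m m 1 :: complex mat)" "j < dim_col (0\<^sub>m m 1 :: complex mat)"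
    hence ij: "i < m" "j = 0" by auto
    have "A' $$ (1 + i, 0) = A0 $$ (i, 0)" using blk ij by simp
    thus "A0 $$ (i,j) = 0\<^sub>m m 1 $$ (i,j)" using col0[of "1+i"] ij by auto
  qed (use blk in auto)
  obtain V T3 where V: "unitary m V" "T3 \<in> carrier_mat m m" "upper_triangular T3" "A3 = V * T3 * adj V"
    using Suc(1)[OF blk(4)] by auto
  have Vc: "V \<in> carrier_mat m m" and aVc: "adj V \<in> carrier_mat m m"
    and VV: "adj V * V = 1\<^sub>m m" "V * adj V = 1\<^sub>m m" using V(1) unfolding unitary_def by auto
  define V' where "V' = four_block_mat (1\<^sub>m 1) (0\<^sub>m 1 m) (0\<^sub>m m 1) V"
  have V'c: "V' \<in> carrier_mat (1+m) (1+m)" unfolding V'_def using Vc by auto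
  have aV': "adj V' = four_block_mat (1\<^sub>m 1) (0\<^sub>m 1 m) (0\<^sub>m m 1) (adj V)"
    unfolding V'_def by (subst adj_four_block[OF one_carrier_mat zero_carrier_mat zero_carrier_mat Vc]) simp
  have aV'c: "adj V' \<in> carrier_mat (1+m) (1+m)" using V'c by auto
  have one4: "four_block_mat (1\<^sub>m 1) (0\<^sub>m 1 m) (0\<^sub>m m 1) (1\<^sub>m m) = (1\<^sub>m (1+m) :: complex mat)"
    by (rule eq_matI) auto
  have uV': "unitary ?n V'"
  proof -
    have "adj V' * V' = 1\<^sub>m (1+m)" unfolding aV' unfolding V'_def
      by (subst mult_four_block_mat[where ?nr1.0=1 and ?n1.0=1 and ?n2.0=m and ?nr2.0=m and ?nc1.0=1 and ?nc2.0=m]) (use Vc aVc VV one4 in auto)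
    moreover have "V' * adj V' = 1\<^sub>m (1+m)" unfolding aV' unfolding V'_def
      by (subst mult_four_block_mat[where ?nr1.0=1 and ?n1.0=1 and ?n2.0=m and ?nr2.0=m and ?nc1.0=1 and ?nc2.0=m]) (use Vc aVc VV one4 in auto)
    ultimately show ?thesis using V'c unfolding unitary_def by auto
  qed
  define T where "T = four_block_mat A1 (A2 * V) (0\<^sub>m m 1) T3"
  have Tc: "T \<in> carrier_mat ?n ?n" unfolding T_def using blk V by auto
  have uT: "upper_triangular T" unfolding T_def
    by (rule upper_triangular_four_block[OF blk(1) V(2) _ V(3)]) (use blk in \<open>auto simp: upper_triangular_def\<close>)
  have AVc: "A2 * V \<in> carrier_mat 1 m" using blk(2) Vc by auto
  have VTc: "V * T3 \<in> carrier_mat m m" using Vc V(2) by auto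
  have "V' * T = four_block_mat (1\<^sub>m 1 * A1 + 0\<^sub>m 1 m * 0\<^sub>m m 1) (1\<^sub>m 1 * (A2 * V) + 0\<^sub>m 1 m * T3)
      (0\<^sub>m m 1 * A1 + V * 0\<^sub>m m 1) (0\<^sub>m m 1 * (A2 * V) + V * T3)" unfolding V'_def T_def
    by (rule mult_four_block_mat[OF one_carrier_mat zero_carrier_mat zero_carrier_mat Vc blk(1) AVc zero_carrier_mat V(2)])
  also have "\<dots> = four_block_mat A1 (A2 * V) (0\<^sub>m m 1) (V * T3)"
  proof (rule cong_four_block_mat)
    show "1\<^sub>m 1 * A1 + 0\<^sub>m 1 m * 0\<^sub>m m 1 = A1" using blk(1) by (simp add: left_mult_one_mat)
    show "1\<^sub>m 1 * (A2 * V) + 0\<^sub>m 1 m * T3 = A2 * V" using AVc V(2) by (simp add: left_mult_one_mat)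
    show "0\<^sub>m m 1 * A1 + V * 0\<^sub>m m 1 = 0\<^sub>m m 1" using blk(1) Vc by simp
    show "0\<^sub>m m 1 * (A2 * V) + V * T3 = V * T3" using left_mult_zero_mat[OF AVc, of m] VTc by simp
  qed
  finally have VT: "V' * T = four_block_mat A1 (A2 * V) (0\<^sub>m m 1) (V * T3)" .
  have "V' * T * adj V' = four_block_mat (A1 * 1\<^sub>m 1 + A2 * V * 0\<^sub>m m 1) (A1 * 0\<^sub>m 1 m + A2 * V * adj V)
      (0\<^sub>m m 1 * 1\<^sub>m 1 + V * T3 * 0\<^sub>m m 1) (0\<^sub>m m 1 * 0\<^sub>m 1 m + V * T3 * adj V)" unfolding VT aV'
    by (rule mult_four_block_mat[OF blk(1) AVc zero_carrier_mat VTc one_carrier_mat zero_carrier_mat zero_carrier_mat aVc])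
  also have "\<dots> = four_block_mat A1 (A2 * V * adj V) (0\<^sub>m m 1) (V * T3 * adj V)"
  proof (rule cong_four_block_mat)
    show "A1 * 1\<^sub>m 1 + A2 * V * 0\<^sub>m m 1 = A1" using blk(1) right_mult_zero_mat[OF AVc, of 1] by (simp add: right_mult_one_mat)
    show "A1 * 0\<^sub>m 1 m + A2 * V * adj V = A2 * V * adj V" using blk(1) AVc aVc by simp
    show "0\<^sub>m m 1 * 1\<^sub>m 1 + V * T3 * 0\<^sub>m m 1 = 0\<^sub>m m 1" using right_mult_zero_mat[OF VTc, of 1] by simp
    show "0\<^sub>m m 1 * 0\<^sub>m 1 m + V * T3 * adj V = V * T3 * adj V" using VTc aVc by simp
  qed
  finally have "V' * T * adj V' = four_block_mat A1 (A2 * V * adj V) (0\<^sub>m m 1) (V * T3 * adj V)" .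
  also have "A2 * V * adj V = A2" using assoc_mult_mat[OF blk(2) Vc aVc] VV blk by auto
  also have "four_block_mat A1 A2 (0\<^sub>m m 1) (V * T3 * adj V) = A'" using blk A0 V by simp
  finally have A'eq: "V' * T * adj V' = A'" .
  have V'c2: "V' \<in> carrier_mat ?n ?n" and aV'c2: "adj V' \<in> carrier_mat ?n ?n" using V'c by auto
  have AWc: "A * W \<in> carrier_mat ?n ?n" using A Wc by auto
  have e1: "W * A' = A * W"
  proof -
    have "W * A' = W * (adj W * (A * W))" unfolding A'_def using assoc_mult_mat[OF aWc A Wc] by simp
    also have "\<dots> = (W * adj W) * (A * W)" using assoc_mult_mat[OF Wc aWc AWc] by simp
    finally show ?thesis using WW left_mult_one_mat[OF AWc] by simp
  qed
  have e2: "W * A' * adj W = A"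
    using e1 assoc_mult_mat[OF A Wc aWc] WW A by simp
  have "(W * V') * T * adj (W * V') = (W * V') * T * (adj V' * adj W)"
    using adj_mult[OF Wc V'c2] by simp
  also have "\<dots> = W * (V' * T * adj V') * adj W"
  proof -
    have VTc2: "V' * T \<in> carrier_mat ?n ?n" using V'c2 Tc by auto
    have "(W * V') * T = W * (V' * T)" using assoc_mult_mat[OF Wc V'c2 Tc] .
    hence "(W * V') * T * (adj V' * adj W) = W * (V' * T) * (adj V' * adj W)" by simp
    also have "\<dots> = W * ((V' * T) * (adj V' * adj W))" using assoc_mult_mat[OF Wc VTc2 mult_carrier_mat[OF aV'c2 aWc]] .
    also have "(V' * T) * (adj V' * adj W) = (V' * T * adj V') * adj W"
      using assoc_mult_mat[OF VTc2 aV'c2 aWc] by simp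
    also have "W * ((V' * T * adj V') * adj W) = W * (V' * T * adj V') * adj W"
      using assoc_mult_mat[OF Wc mult_carrier_mat[OF VTc2 aV'c2] aWc] by simp
    finally show ?thesis .
  qed
  also have "\<dots> = A" using A'eq e2 by simp
  finally show ?case using unitary_mult[OF W(1) uV'] Tc uT by metis
qed



definition dmat :: "nat \<Rightarrow> (nat \<Rightarrow> real) \<Rightarrow> complex mat" where
  "dmat n d = mat n n (\<lambda>(i,j). if i = j then complex_of_real (d i) else 0)"

lemma dmat_carrier[simp]: "dmat n d \<in> carrier_mat n n" unfolding dmat_def by auto
lemma dmat_dims[simp]: "dim_row (dmat n d) = n" "dim_col (dmat n d) = n" unfolding dmat_def by auto

lemma adj_dmat[simp]: "adj (dmat n d) = dmat n d"
  unfolding dmat_def by (rule eq_matI) auto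

lemma hermitian_spectral:
  assumes H: "hermitian n A"
  shows "\<exists>U d. unitary n U \<and> A = U * dmat n d * adj U"
proof -
  have A: "A \<in> carrier_mat n n" and aA: "adj A = A" using H unfolding hermitian_def by auto
  obtain U T where U: "unitary n U" and T: "T \<in> carrier_mat n n" "upper_triangular T" "A = U * T * adj U"
    using unitary_schur[OF A] by auto
  have Uc: "U \<in> carrier_mat n n" and aUc: "adj U \<in> carrier_mat n n"
    and UU: "adj U * U = 1\<^sub>m n" "U * adj U = 1\<^sub>m n" using U unfolding unitary_def by auto
  have TUc: "T * adj U \<in> carrier_mat n n" using T Uc by auto
  have "adj U * A * U = (adj U * U) * T * (adj U * U)"
  proof -
    have "adj U * A * U = adj U * (U * (T * adj U)) * U" using T(3) assoc_mult_mat[OF Uc T(1) aUc] by simp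
    also have "\<dots> = (adj U * U) * (T * adj U) * U" using assoc_mult_mat[OF aUc Uc TUc] by simp
    also have "\<dots> = (adj U * U) * (T * (adj U * U))"
      using assoc_mult_mat[OF mult_carrier_mat[OF aUc Uc] TUc Uc] assoc_mult_mat[OF T(1) aUc Uc] by simp
    finally show ?thesis using UU T(1) by simp
  qed
  hence Teq: "T = adj U * A * U" using UU T(1) by simp
  have aT: "adj T = T" unfolding Teq using adj_mult[OF mult_carrier_mat[OF aUc A] Uc] adj_mult[OF aUc A] aA
    assoc_mult_mat[OF aUc A Uc] by simp
  have low: "T $$ (i,j) = 0" if "i < n" "j < n" "i \<noteq> j" for i j
  proof (cases "j < i")
    case True thus ?thesis using T(1,2) that unfolding upper_triangular_def by auto
  next
    case False
    hence "T $$ (j,i) = 0" using T(1,2) that unfolding upper_triangular_def by auto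
    moreover have "adj T $$ (i,j) = cnj (T $$ (j,i))" using T(1) that by simp
    ultimately show ?thesis using aT by simp
  qed
  have re: "T $$ (i,i) = complex_of_real (Re (T $$ (i,i)))" if "i < n" for i
  proof -
    have "adj T $$ (i,i) = cnj (T $$ (i,i))" using T(1) that by simp
    hence "cnj (T $$ (i,i)) = T $$ (i,i)" using aT by simp
    thus ?thesis by (metis Reals_cnj_iff complex_is_Real_iff of_real_Re)
  qed
  have "T = dmat n (\<lambda>i. Re (T $$ (i,i)))"
    by (rule eq_matI) (use T(1) low re in \<open>auto simp: dmat_def\<close>)
  thus ?thesis using U T(3) by metis
qed

lemma udu_index: assumes "U \<in> carrier_mat n n" "i < n" "j < n"
  shows "(U * dmat n d * adj U) $$ (i,j) = (\<Sum>k<n. U $$ (i,k) * complex_of_real (d k) * cnj (U $$ (j,k)))"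
proof -
  have "(U * dmat n d * adj U) $$ (i,j) = (\<Sum>l<n. (U * dmat n d) $$ (i,l) * cnj (U $$ (j,l)))"
    using assms by (simp add: scalar_prod_def row_def col_def atLeast0LessThan)
  also have "\<dots> = (\<Sum>l<n. U $$ (i,l) * complex_of_real (d l) * cnj (U $$ (j,l)))"
  proof (rule sum.cong)
    fix l assume l: "l \<in> {..<n}"
    have "(U * dmat n d) $$ (i,l) = (\<Sum>k<n. U $$ (i,k) * dmat n d $$ (k,l))"
      using assms l by (simp add: scalar_prod_def row_def col_def atLeast0LessThan)
    also have "\<dots> = U $$ (i,l) * complex_of_real (d l)"
      using l by (simp add: dmat_def if_distrib cong: if_cong)
    finally show "(U * dmat n d) $$ (i,l) * cnj (U $$ (j,l)) = U $$ (i,l) * complex_of_real (d l) * cnj (U $$ (j,l))" by simp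
  qed simp
  finally show ?thesis .
qed

definition qf :: "nat \<Rightarrow> complex mat \<Rightarrow> (nat \<Rightarrow> complex) \<Rightarrow> complex" where
  "qf n A v = (\<Sum>i<n. \<Sum>j<n. cnj (v i) * A $$ (i,j) * v j)"

lemma qf_udu: assumes "U \<in> carrier_mat n n"
  shows "qf n (U * dmat n d * adj U) v =
     (\<Sum>k<n. complex_of_real (d k) * ((\<Sum>i<n. cnj (v i) * U $$ (i,k)) * cnj (\<Sum>i<n. cnj (v i) * U $$ (i,k))))"
proof -
  have "qf n (U * dmat n d * adj U) v = (\<Sum>i<n. \<Sum>j<n. \<Sum>k<n. cnj (v i) * U $$ (i,k) * complex_of_real (d k) * cnj (U $$ (j,k)) * v j)"
    unfolding qf_def
    by (intro sum.cong refl) (simp add: udu_index[OF assms] sum_distrib_left sum_distrib_right mult_ac)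
  also have "\<dots> = (\<Sum>k<n. \<Sum>i<n. \<Sum>j<n. cnj (v i) * U $$ (i,k) * complex_of_real (d k) * cnj (U $$ (j,k)) * v j)"
    by (subst sum.swap, rule sum.cong[OF refl], rule sum.swap)
  also have "\<dots> = (\<Sum>k<n. complex_of_real (d k) * ((\<Sum>i<n. cnj (v i) * U $$ (i,k)) * cnj (\<Sum>i<n. cnj (v i) * U $$ (i,k))))"
    by (simp add: sum_distrib_left sum_distrib_right mult_ac)
  finally show ?thesis .
qed

lemma mtrace_mult: assumes "A \<in> carrier_mat n m" "B \<in> carrier_mat m n"
  shows "mtrace (A * B) = (\<Sum>i<n. \<Sum>j<m. A $$ (i,j) * B $$ (j,i))"
  unfolding mtrace_def using assms by (intro sum.cong) (auto simp: scalar_prod_def atLeast0LessThan)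

lemma unitary_cols: assumes "unitary n U" "k < n" "l < n"
  shows "(\<Sum>i<n. cnj (U $$ (i,k)) * U $$ (i,l)) = (if k = l then 1 else 0)"
proof -
  have Uc: "U \<in> carrier_mat n n" using assms unfolding unitary_def by auto
  have "(\<Sum>i<n. cnj (U $$ (i,k)) * U $$ (i,l)) = (adj U * U) $$ (k,l)"
    using Uc assms by (simp add: scalar_prod_def atLeast0LessThan)
  thus ?thesis using assms unfolding unitary_def by simp
qed

lemma hermitian_udu: assumes "U \<in> carrier_mat n n" shows "hermitian n (U * dmat n d * adj U)"
proof -
  have "adj (U * dmat n d * adj U) = adj (adj U) * adj (U * dmat n d)"
    using adj_mult[OF mult_carrier_mat[OF assms dmat_carrier] adj_carrier[OF assms]] .
  also have "\<dots> = U * (dmat n d * adj U)" using adj_mult[OF assms dmat_carrier] by simp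
  also have "\<dots> = U * dmat n d * adj U" using assoc_mult_mat[OF assms dmat_carrier adj_carrier[OF assms]] by simp
  finally show ?thesis unfolding hermitian_def using assms by auto
qed

lemma psd_udu: assumes U: "U \<in> carrier_mat n n" and d: "\<And>k. k < n \<Longrightarrow> d k \<ge> 0"
  shows "psd n (U * dmat n d * adj U)"
  unfolding psd_def
proof (intro conjI allI)
  show "hermitian n (U * dmat n d * adj U)" using hermitian_udu[OF U] .
  fix v :: "nat \<Rightarrow> complex"
  define w where "w k = (\<Sum>i<n. cnj (v i) * U $$ (i,k))" for k
  have "Re (qf n (U * dmat n d * adj U) v) = (\<Sum>k<n. d k * (cmod (w k))^2)"
    unfolding qf_udu[OF U] w_def[symmetric] by (simp add: complex_mult_cnj cmod_power2 flip: of_real_mult)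
  also have "\<dots> \<ge> 0" using d by (intro sum_nonneg) auto
  finally show "0 \<le> Re (\<Sum>i<n. \<Sum>j<n. cnj (v i) * (U * dmat n d * adj U) $$ (i, j) * v j)"
    unfolding qf_def .
qed

lemma qf_col_udu: assumes U: "unitary n U" and k: "k < n"
  shows "qf n (U * dmat n d * adj U) (\<lambda>i. U $$ (i,k)) = complex_of_real (d k)"
proof -
  have Uc: "U \<in> carrier_mat n n" using U unfolding unitary_def by auto
  have w: "(\<Sum>i<n. cnj (U $$ (i,k)) * U $$ (i,l)) = (if k = l then 1 else 0)" if "l < n" for l
    using unitary_cols[OF U k that] .
  have "qf n (U * dmat n d * adj U) (\<lambda>i. U $$ (i,k)) =
      (\<Sum>l<n. complex_of_real (d l) * ((if k = l then 1 else 0) * cnj (if k = l then 1 else 0)))"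
    unfolding qf_udu[OF Uc] by (intro sum.cong refl) (simp add: w)
  also have "\<dots> = complex_of_real (d k)" using k by (simp add: if_distrib cong: if_cong)
  finally show ?thesis .
qed

lemma psd_spectral: assumes "psd n A"
  shows "\<exists>U d. unitary n U \<and> (\<forall>k<n. d k \<ge> 0) \<and> A = U * dmat n d * adj U"
proof -
  obtain U d where U: "unitary n U" "A = U * dmat n d * adj U"
    using hermitian_spectral assms unfolding psd_def by blast
  have "d k \<ge> 0" if k: "k < n" for k
  proof -
    have "0 \<le> Re (qf n A (\<lambda>i. U $$ (i,k)))" using assms unfolding psd_def qf_def
      by (elim conjE) (drule spec[of _ "\<lambda>i. U $$ (i,k)"], simp)
    thus ?thesis using qf_col_udu[OF U(1) k, of d] U(2) by simp
  qed
  thus ?thesis using U by blast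
qed

lemma mtrace_udu: assumes U: "unitary n U"
  shows "mtrace (U * dmat n d * adj U) = complex_of_real (\<Sum>k<n. d k)"
proof -
  have Uc: "U \<in> carrier_mat n n" using U unfolding unitary_def by auto
  have "mtrace (U * dmat n d * adj U) = (\<Sum>i<n. \<Sum>k<n. U $$ (i,k) * complex_of_real (d k) * cnj (U $$ (i,k)))"
  proof -
    have "dim_row (U * dmat n d * adj U) = n" using Uc by simp
    have "\<And>i. i \<in> {..<n} \<Longrightarrow> (U * dmat n d * adj U) $$ (i,i) = (\<Sum>k<n. U $$ (i,k) * complex_of_real (d k) * cnj (U $$ (i,k)))"
      using udu_index[OF Uc] by blast
    thus ?thesis unfolding mtrace_def \<open>dim_row (U * dmat n d * adj U) = n\<close> by (rule sum.cong[OF refl])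
  qed
  also have "\<dots> = (\<Sum>k<n. complex_of_real (d k) * (\<Sum>i<n. cnj (U $$ (i,k)) * U $$ (i,k)))"
    by (subst sum.swap) (simp add: sum_distrib_left mult_ac)
  also have "\<dots> = (\<Sum>k<n. complex_of_real (d k))"
    by (intro sum.cong refl) (simp add: unitary_cols[OF U])
  finally show ?thesis by simp
qed

lemma qf_hermitian_real: assumes "hermitian n K" shows "cnj (qf n K v) = qf n K v"
proof -
  have K: "K \<in> carrier_mat n n" "adj K = K" using assms unfolding hermitian_def by auto
  have e: "cnj (K $$ (i,j)) = K $$ (j,i)" if "i < n" "j < n" for i j
    using K that by (metis adj_index carrier_matD)
  have "cnj (qf n K v) = (\<Sum>i<n. \<Sum>j<n. v i * K $$ (j,i) * cnj (v j))"
    unfolding qf_def by (simp add: e)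
  also have "\<dots> = qf n K v" unfolding qf_def by (subst sum.swap) (simp add: mult_ac)
  finally show ?thesis .
qed

lemma trace_psd_nonneg: assumes K: "psd n K" and R: "psd n \<rho>"
  shows "\<exists>r \<ge> 0. mtrace (K * \<rho>) = complex_of_real r"
proof -
  obtain U d where U: "unitary n U" "\<forall>k<n. d k \<ge> 0" "\<rho> = U * dmat n d * adj U"
    using psd_spectral[OF R] by auto
  have Uc: "U \<in> carrier_mat n n" using U unfolding unitary_def by auto
  have Kc: "K \<in> carrier_mat n n" using K unfolding psd_def hermitian_def by auto
  define c where "c k = qf n K (\<lambda>i. U $$ (i,k))" for k
  have creal: "c k = complex_of_real (Re (c k))" for k
    using qf_hermitian_real[of n K] K unfolding psd_def c_def by (metis Reals_cnj_iff complex_is_Real_iff of_real_Re)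
  have cpos: "Re (c k) \<ge> 0" for k using K unfolding psd_def c_def qf_def
    by (elim conjE) (drule spec[of _ "\<lambda>i. U $$ (i,k)"], simp)
  have Rc: "\<rho> \<in> carrier_mat n n" using R unfolding psd_def hermitian_def by auto
  have re: "\<rho> $$ (j,i) = (\<Sum>k<n. U $$ (j,k) * complex_of_real (d k) * cnj (U $$ (i,k)))" if "i<n" "j<n" for i j
    unfolding U(3) using udu_index[OF Uc that(2,1)] .
  have "mtrace (K * \<rho>) = (\<Sum>i<n. \<Sum>j<n. K $$ (i,j) * \<rho> $$ (j,i))" by (rule mtrace_mult[OF Kc Rc])
  also have "\<dots> = (\<Sum>i<n. \<Sum>j<n. K $$ (i,j) * (\<Sum>k<n. U $$ (j,k) * complex_of_real (d k) * cnj (U $$ (i,k))))"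
    by (intro sum.cong refl) (simp add: re)
  also have "\<dots> = (\<Sum>i<n. \<Sum>j<n. \<Sum>k<n. complex_of_real (d k) * (cnj (U $$ (i,k)) * K $$ (i,j) * U $$ (j,k)))"
    by (simp add: sum_distrib_left mult_ac)
  also have "\<dots> = (\<Sum>k<n. complex_of_real (d k) * c k)"
    unfolding c_def qf_def
    by (subst sum.swap, subst (2) sum.swap) (simp add: sum_distrib_left mult_ac)
  also have "\<dots> = complex_of_real (\<Sum>k<n. d k * Re (c k))"
    by (subst creal) (simp flip: of_real_mult)
  finally show ?thesis using U(2) cpos by (intro exI[of _ "\<Sum>k<n. d k * Re (c k)"]) (auto intro!: sum_nonneg)
qed

lemma sum_ivl_shift: "(\<Sum>K\<in>{k..<k+b}. f K) = (\<Sum>l<b. f (k + l))" for k b :: nat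
  by (induct b) (auto simp: atLeastLessThanSuc add.commute)

lemma sum_pair: "(\<Sum>K<a*b. f K) = (\<Sum>k<a. \<Sum>l<b. f (k*b + l))" for a b :: nat
proof -
  have "(\<Sum>K<a*b. f K) = (\<Sum>k<a. sum f {k*b..<k*b+b})" by (rule sum.nat_group[symmetric])
  also have "\<dots> = (\<Sum>k<a. \<Sum>l<b. f (k*b + l))" by (simp add: sum_ivl_shift)
  finally show ?thesis .
qed

lemma kron_carrier[simp]: "kron dA dB A B \<in> carrier_mat (dA*dB) (dA*dB)"
  unfolding kron_def by auto
lemma kron_dims[simp]: "dim_row (kron dA dB A B) = dA*dB" "dim_col (kron dA dB A B) = dA*dB"
  unfolding kron_def by auto

lemma kron_index: "I < dA*dB \<Longrightarrow> J < dA*dB \<Longrightarrow>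
  kron dA dB A B $$ (I,J) = A $$ (I div dB, J div dB) * B $$ (I mod dB, J mod dB)"
  unfolding kron_def by auto

lemma div_mod_bound: fixes I dA dB :: nat assumes "I < dA * dB" shows "I div dB < dA" "I mod dB < dB"
proof -
  have "dB > 0" using assms by (cases dB) auto
  thus "I mod dB < dB" by simp
  show "I div dB < dA" using assms by (simp add: less_mult_imp_div_less)
qed

lemma kron_mult: assumes "A \<in> carrier_mat dA dA" "C \<in> carrier_mat dA dA" "B \<in> carrier_mat dB dB" "D \<in> carrier_mat dB dB"
  shows "kron dA dB A B * kron dA dB C D = kron dA dB (A * C) (B * D)"
proof (rule eq_matI)
  fix I J assume "I < dim_row (kron dA dB (A * C) (B * D))" "J < dim_col (kron dA dB (A * C) (B * D))"
  hence IJ: "I < dA*dB" "J < dA*dB" by auto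
  note b = div_mod_bound[OF IJ(1)] div_mod_bound[OF IJ(2)]
  have "(kron dA dB A B * kron dA dB C D) $$ (I,J) = (\<Sum>K<dA*dB. kron dA dB A B $$ (I,K) * kron dA dB C D $$ (K,J))"
    using IJ by (simp add: scalar_prod_def atLeast0LessThan)
  also have "\<dots> = (\<Sum>k<dA. \<Sum>l<dB. A $$ (I div dB, k) * B $$ (I mod dB, l) * (C $$ (k, J div dB) * D $$ (l, J mod dB)))"
  proof -
    have "\<And>k l. k < dA \<Longrightarrow> l < dB \<Longrightarrow> k * dB + l < dA * dB"
    proof -
      fix k l assume "k < dA" "l < dB"
      hence "k * dB + l < k * dB + dB" by simp
      also have "\<dots> = Suc k * dB" by simp
      also have "\<dots> \<le> dA * dB" using \<open>k < dA\<close> by (intro mult_right_mono) auto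
      finally show "k * dB + l < dA * dB" .
    qed
    thus ?thesis unfolding sum_pair using IJ by (intro sum.cong refl) (simp add: kron_index)
  qed
  also have "\<dots> = (A * C) $$ (I div dB, J div dB) * (B * D) $$ (I mod dB, J mod dB)"
    using assms b by (simp add: scalar_prod_def atLeast0LessThan sum_product mult_ac)
  also have "\<dots> = kron dA dB (A * C) (B * D) $$ (I,J)" using IJ by (simp add: kron_index)
  finally show "(kron dA dB A B * kron dA dB C D) $$ (I,J) = kron dA dB (A * C) (B * D) $$ (I,J)" .
qed auto

lemma adj_kron: assumes "A \<in> carrier_mat dA dA" "B \<in> carrier_mat dB dB"
  shows "adj (kron dA dB A B) = kron dA dB (adj A) (adj B)"
proof (rule eq_matI)
  fix I J assume "I < dim_row (kron dA dB (adj A) (adj B))" "J < dim_col (kron dA dB (adj A) (adj B))"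
  hence IJ: "I < dA*dB" "J < dA*dB" by auto
  note b = div_mod_bound[OF IJ(1)] div_mod_bound[OF IJ(2)]
  show "adj (kron dA dB A B) $$ (I, J) = kron dA dB (adj A) (adj B) $$ (I, J)"
    using IJ b assms by (simp add: kron_index)
qed auto

lemma kron_dmat: "kron dA dB (dmat dA d) (dmat dB e) = dmat (dA*dB) (\<lambda>I. d (I div dB) * e (I mod dB))"
proof (rule eq_matI)
  fix I J assume "I < dim_row (dmat (dA*dB) (\<lambda>I. d (I div dB) * e (I mod dB)))"
    "J < dim_col (dmat (dA*dB) (\<lambda>I. d (I div dB) * e (I mod dB)))"
  hence IJ: "I < dA*dB" "J < dA*dB" by auto
  note b = div_mod_bound[OF IJ(1)] div_mod_bound[OF IJ(2)]
  have "(I div dB = J div dB \<and> I mod dB = J mod dB) = (I = J)"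
    by (metis div_mult_mod_eq)
  thus "kron dA dB (dmat dA d) (dmat dB e) $$ (I,J) = dmat (dA*dB) (\<lambda>I. d (I div dB) * e (I mod dB)) $$ (I,J)"
    using IJ b by (auto simp: kron_index dmat_def)
qed auto

lemma kron_udu: assumes U: "U \<in> carrier_mat dA dA" and V: "V \<in> carrier_mat dB dB"
  shows "kron dA dB (U * dmat dA d * adj U) (V * dmat dB e * adj V)
     = kron dA dB U V * dmat (dA*dB) (\<lambda>I. d (I div dB) * e (I mod dB)) * adj (kron dA dB U V)"
proof -
  have "kron dA dB (U * dmat dA d * adj U) (V * dmat dB e * adj V) = kron dA dB (U * dmat dA d) (V * dmat dB e) * kron dA dB (adj U) (adj V)"
    using U V by (simp add: kron_mult)
  also have "kron dA dB (U * dmat dA d) (V * dmat dB e) = kron dA dB U V * kron dA dB (dmat dA d) (dmat dB e)"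
    using U V by (simp add: kron_mult)
  finally show ?thesis using U V by (simp add: kron_dmat adj_kron)
qed

lemma psd_kron: assumes "psd dA M" "psd dB N" shows "psd (dA*dB) (kron dA dB M N)"
proof -
  obtain U d where U: "unitary dA U" "\<forall>k<dA. d k \<ge> 0" "M = U * dmat dA d * adj U" using psd_spectral[OF assms(1)] by auto
  obtain V e where V: "unitary dB V" "\<forall>k<dB. e k \<ge> 0" "N = V * dmat dB e * adj V" using psd_spectral[OF assms(2)] by auto
  have Uc: "U \<in> carrier_mat dA dA" and Vc: "V \<in> carrier_mat dB dB" using U V unfolding unitary_def by auto
  show ?thesis unfolding U(3) V(3) kron_udu[OF Uc Vc]
    by (rule psd_udu) (use U V div_mod_bound in auto)
qed

lemma dmat_mult: "dmat n d * dmat n e = dmat n (\<lambda>i. d i * e i)"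
proof (rule eq_matI)
  fix i j assume "i < dim_row (dmat n (\<lambda>i. d i * e i))" "j < dim_col (dmat n (\<lambda>i. d i * e i))"
  hence ij: "i < n" "j < n" by auto
  have "(dmat n d * dmat n e) $$ (i,j) = (\<Sum>k<n. dmat n d $$ (i,k) * dmat n e $$ (k,j))"
    using ij by (simp add: scalar_prod_def atLeast0LessThan)
  also have "\<dots> = (\<Sum>k<n. if k = i then (if i = j then complex_of_real (d i * e i) else 0) else 0)"
    using ij by (intro sum.cong refl) (auto simp: dmat_def)
  also have "\<dots> = dmat n (\<lambda>i. d i * e i) $$ (i,j)" using ij by (simp add: dmat_def)
  finally show "(dmat n d * dmat n e) $$ (i,j) = dmat n (\<lambda>i. d i * e i) $$ (i,j)" .
qed auto

lemma udu_mult: assumes U: "unitary n U"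
  shows "(U * dmat n d * adj U) * (U * dmat n e * adj U) = U * dmat n (\<lambda>i. d i * e i) * adj U"
proof -
  have Uc: "U \<in> carrier_mat n n" and aUc: "adj U \<in> carrier_mat n n" and UU: "adj U * U = 1\<^sub>m n"
    using U unfolding unitary_def by auto
  have Dc: "dmat n d \<in> carrier_mat n n" "dmat n e \<in> carrier_mat n n" by auto
  have EaU: "dmat n e * adj U \<in> carrier_mat n n" using mult_carrier_mat[OF dmat_carrier aUc] .
  have UD: "U * dmat n d \<in> carrier_mat n n" using Uc by auto
  have UEaU: "U * dmat n e * adj U \<in> carrier_mat n n" using Uc aUc by auto
  have "adj U * (U * dmat n e * adj U) = dmat n e * adj U"
  proof -
    have "adj U * (U * dmat n e * adj U) = adj U * (U * (dmat n e * adj U))"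
      using assoc_mult_mat[OF Uc Dc(2) aUc] by simp
    also have "\<dots> = (adj U * U) * (dmat n e * adj U)" using assoc_mult_mat[OF aUc Uc EaU] by simp
    finally show ?thesis using UU EaU by simp
  qed
  hence "(U * dmat n d * adj U) * (U * dmat n e * adj U) = U * dmat n d * (dmat n e * adj U)"
    using assoc_mult_mat[OF UD aUc UEaU] by simp
  also have "\<dots> = U * (dmat n d * (dmat n e * adj U))" using assoc_mult_mat[OF Uc Dc(1) EaU] .
  also have "dmat n d * (dmat n e * adj U) = dmat n (\<lambda>i. d i * e i) * adj U"
    using assoc_mult_mat[OF Dc aUc, symmetric] dmat_mult by simp
  also have "U * (dmat n (\<lambda>i. d i * e i) * adj U) = U * dmat n (\<lambda>i. d i * e i) * adj U"
    using assoc_mult_mat[OF Uc dmat_carrier aUc] by simp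
  finally show ?thesis .
qed

lemma proots_prod_lin: "proots (\<Prod>a\<leftarrow>xs. [:- a, 1:]) = mset (xs :: complex list)"
proof (induct xs)
  case (Cons a xs)
  have nz: "(\<Prod>a\<leftarrow>xs. [:- a, 1:]) \<noteq> 0" by (auto simp: prod_list_zero_iff)
  have "proots (\<Prod>a\<leftarrow>a#xs. [:- a, 1:]) = proots ([:- a, 1:] * (\<Prod>a\<leftarrow>xs. [:- a, 1:]))" by simp
  also have "\<dots> = proots [:- a, 1:] + proots (\<Prod>a\<leftarrow>xs. [:- a, 1:])" by (rule proots_mult) (use nz in auto)
  also have "\<dots> = mset (a # xs)" by (simp only: proots_linear_factor Cons) simp
  finally show ?case .
qed simp

lemma trace_norm_udu: assumes U: "unitary n U"
  shows "trace_norm (U * dmat n d * adj U) = (\<Sum>i<n. \<bar>d i\<bar>)"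
proof -
  have Uc: "U \<in> carrier_mat n n" and aUc: "adj U \<in> carrier_mat n n"
    and UU: "adj U * U = 1\<^sub>m n" "U * adj U = 1\<^sub>m n" using U unfolding unitary_def by auto
  let ?O = "U * dmat n d * adj U"
  have aO: "adj ?O = ?O" using hermitian_udu[OF Uc] unfolding hermitian_def by simp
  have OO: "adj ?O * ?O = U * dmat n (\<lambda>i. d i * d i) * adj U" unfolding aO udu_mult[OF U] ..
  have sim: "similar_mat (U * dmat n (\<lambda>i. d i * d i) * adj U) (dmat n (\<lambda>i. d i * d i))"
    unfolding similar_mat_def similar_mat_wit_def using Uc aUc UU
    by (intro exI[of _ U] exI[of _ "adj U"]) (auto simp: Let_def)
  have ut: "upper_triangular (dmat n (\<lambda>i. d i * d i))" unfolding upper_triangular_def dmat_def by auto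
  have cp: "char_poly (adj ?O * ?O) = (\<Prod>a\<leftarrow>map (\<lambda>i. complex_of_real (d i * d i)) [0..<n]. [:- a, 1:])"
  proof -
    have "diag_mat (dmat n (\<lambda>i. d i * d i)) = map (\<lambda>i. complex_of_real (d i * d i)) [0..<n]"
      unfolding diag_mat_def by (intro map_cong) (auto simp: dmat_def)
    thus ?thesis unfolding OO char_poly_similar[OF sim] char_poly_upper_triangular[OF dmat_carrier ut] by simp
  qed
  have "trace_norm ?O = (\<Sum>i\<in>{0..<n}. sqrt (Re (complex_of_real (d i * d i))))"
    unfolding trace_norm_def cp proots_prod_lin sum_unfold_sum_mset
    by (simp add: image_mset.compositionality o_def)
  also have "\<dots> = (\<Sum>i<n. \<bar>d i\<bar>)"
    by (simp add: atLeast0LessThan)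
  finally show ?thesis .
qed

lemma density_udu: assumes U: "unitary n U" and d: "\<And>k. k < n \<Longrightarrow> d k \<ge> 0" and s: "(\<Sum>k<n. d k) = 1"
  shows "density n (U * dmat n d * adj U)"
  unfolding density_def using psd_udu[of U n d] U d s mtrace_udu[OF U, of d] unfolding unitary_def by auto

lemma pseudo_decomp: assumes Op: "pseudo_state n Op"
  shows "\<exists>t \<rho>1 \<rho>2. t \<ge> 0 \<and> density n \<rho>1 \<and> density n \<rho>2 \<and>
     (\<forall>i<n. \<forall>j<n. Op $$ (i,j) = complex_of_real (1 + t) * \<rho>1 $$ (i,j) - complex_of_real t * \<rho>2 $$ (i,j)) \<and>
     trace_norm Op = 1 + 2 * t"
proof -
  obtain U d where U: "unitary n U" "Op = U * dmat n d * adj U"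
    using hermitian_spectral Op unfolding pseudo_state_def by blast
  have Uc: "U \<in> carrier_mat n n" using U unfolding unitary_def by auto
  have sd: "(\<Sum>k<n. d k) = 1" using mtrace_udu[OF U(1), of d] Op U(2) unfolding pseudo_state_def by (simp flip: of_real_sum)
  define dp where "dp k = max (d k) 0" for k
  define dm where "dm k = max (- d k) 0" for k
  define t where "t = (\<Sum>k<n. dm k)"
  have t0: "t \<ge> 0" unfolding t_def dm_def by (intro sum_nonneg) auto
  have ddm: "d k = dp k - dm k" for k unfolding dp_def dm_def by auto
  have sdp: "(\<Sum>k<n. dp k) = 1 + t" using sd unfolding t_def ddm sum_subtractf by simp
  have abs: "(\<Sum>k<n. \<bar>d k\<bar>) = 1 + 2 * t"
  proof -
    have "\<bar>d k\<bar> = dp k + dm k" for k unfolding dp_def dm_def by auto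
    hence "(\<Sum>k<n. \<bar>d k\<bar>) = (\<Sum>k<n. dp k) + (\<Sum>k<n. dm k)" by (simp add: sum.distrib)
    thus ?thesis using sdp unfolding t_def by simp
  qed
  define e1 where "e1 k = dp k / (1 + t)" for k
  define e2 where "e2 k = (if t = 0 then e1 k else dm k / t)" for k
  have se1: "(\<Sum>k<n. e1 k) = 1" unfolding e1_def using sdp t0 by (simp add: sum_divide_distrib[symmetric])
  have se2: "(\<Sum>k<n. e2 k) = 1"
  proof (cases "t = 0")
    case True thus ?thesis using se1 unfolding e2_def by simp
  next
    case False thus ?thesis unfolding e2_def using t0 by (simp add: sum_divide_distrib[symmetric] t_def[symmetric])
  qed
  have e1p: "e1 k \<ge> 0" for k unfolding e1_def dp_def using t0 by auto
  have e2p: "e2 k \<ge> 0" for k unfolding e2_def dm_def using e1p t0 by auto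
  have dk: "d k = (1 + t) * e1 k - t * e2 k" if k: "k < n" for k
  proof (cases "t = 0")
    case True
    have "dm k = 0" using True k unfolding t_def dm_def
      by (subst (asm) sum_nonneg_eq_0_iff) auto
    thus ?thesis using True ddm[of k] unfolding e1_def e2_def by simp
  next
    case False
    have "1 + t \<noteq> 0" using t0 by simp
    thus ?thesis using False ddm[of k] unfolding e1_def e2_def by simp
  qed
  define \<rho>1 where "\<rho>1 = U * dmat n e1 * adj U"
  define \<rho>2 where "\<rho>2 = U * dmat n e2 * adj U"
  have entries: "Op $$ (i,j) = complex_of_real (1 + t) * \<rho>1 $$ (i,j) - complex_of_real t * \<rho>2 $$ (i,j)"
    if ij: "i < n" "j < n" for i j
  proof -
    have "complex_of_real (1 + t) * \<rho>1 $$ (i,j) - complex_of_real t * \<rho>2 $$ (i,j)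
      = (\<Sum>k<n. U $$ (i,k) * complex_of_real ((1 + t) * e1 k - t * e2 k) * cnj (U $$ (j,k)))"
      unfolding \<rho>1_def \<rho>2_def udu_index[OF Uc ij] sum_distrib_left sum_subtractf[symmetric]
      by (intro sum.cong refl) (simp add: algebra_simps)
    also have "\<dots> = Op $$ (i,j)" unfolding U(2) udu_index[OF Uc ij] by (intro sum.cong refl) (simp add: dk)
    finally show ?thesis by simp
  qed
  show ?thesis
    apply (rule exI[of _ t], rule exI[of _ \<rho>1], rule exI[of _ \<rho>2])
    using t0 density_udu[OF U(1) e1p se1] density_udu[OF U(1) e2p se2] entries
      trace_norm_udu[OF U(1), of d] abs U(2) unfolding \<rho>1_def \<rho>2_def by auto
qed



lemma mtrace_kron: assumes "\<rho> \<in> carrier_mat (dA*dB) (dA*dB)"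
  shows "mtrace (kron dA dB A B * \<rho>) = (\<Sum>I<dA*dB. \<Sum>J<dA*dB. A $$ (I div dB, J div dB) * B $$ (I mod dB, J mod dB) * \<rho> $$ (J,I))"
  unfolding mtrace_mult[OF kron_carrier assms] by (intro sum.cong refl) (simp add: kron_index)

lemma povm_sum: assumes "povm d M" "i < d" "j < d"
  shows "(\<Sum>a\<in>UNIV. M x a $$ (i,j)) = (if i = j then 1 else 0)"
  using assms unfolding povm_def by auto

lemma povm_carrier: "povm d M \<Longrightarrow> M x a \<in> carrier_mat d d"
  unfolding povm_def psd_def hermitian_def by auto

lemma qbox_sumB: assumes N: "povm dB N" and R: "\<rho> \<in> carrier_mat (dA*dB) (dA*dB)"
  shows "(\<Sum>b\<in>UNIV. mtrace (kron dA dB A (N y b) * \<rho>)) =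
    (\<Sum>I<dA*dB. \<Sum>J<dA*dB. A $$ (I div dB, J div dB) * (if I mod dB = J mod dB then 1 else 0) * \<rho> $$ (J,I))"
proof -
  have "(\<Sum>b\<in>UNIV. mtrace (kron dA dB A (N y b) * \<rho>)) =
     (\<Sum>I<dA*dB. \<Sum>J<dA*dB. \<Sum>b\<in>UNIV. A $$ (I div dB, J div dB) * N y b $$ (I mod dB, J mod dB) * \<rho> $$ (J,I))"
    unfolding mtrace_kron[OF R] by (subst sum.swap, rule sum.cong[OF refl], subst sum.swap, rule refl)
  also have "\<dots> = (\<Sum>I<dA*dB. \<Sum>J<dA*dB. A $$ (I div dB, J div dB) * (if I mod dB = J mod dB then 1 else 0) * \<rho> $$ (J,I))"
  proof (intro sum.cong refl)
    fix I J assume IJ: "I \<in> {..<dA*dB}" "J \<in> {..<dA*dB}"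
    have "(\<Sum>b\<in>UNIV. A $$ (I div dB, J div dB) * N y b $$ (I mod dB, J mod dB) * \<rho> $$ (J,I))
       = A $$ (I div dB, J div dB) * (\<Sum>b\<in>UNIV. N y b $$ (I mod dB, J mod dB)) * \<rho> $$ (J,I)"
      by (simp add: sum_distrib_left sum_distrib_right)
    also have "(\<Sum>b\<in>UNIV. N y b $$ (I mod dB, J mod dB)) = (if I mod dB = J mod dB then 1 else 0)"
      using povm_sum[OF N] div_mod_bound IJ by simp
    finally show "(\<Sum>b\<in>UNIV. A $$ (I div dB, J div dB) * N y b $$ (I mod dB, J mod dB) * \<rho> $$ (J,I)) =
      A $$ (I div dB, J div dB) * (if I mod dB = J mod dB then 1 else 0) * \<rho> $$ (J,I)" .
  qed
  finally show ?thesis .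
qed

lemma qbox_sumA: assumes M: "povm dA M" and R: "\<rho> \<in> carrier_mat (dA*dB) (dA*dB)"
  shows "(\<Sum>a\<in>UNIV. mtrace (kron dA dB (M x a) B * \<rho>)) =
    (\<Sum>I<dA*dB. \<Sum>J<dA*dB. (if I div dB = J div dB then 1 else 0) * B $$ (I mod dB, J mod dB) * \<rho> $$ (J,I))"
proof -
  have "(\<Sum>a\<in>UNIV. mtrace (kron dA dB (M x a) B * \<rho>)) =
     (\<Sum>I<dA*dB. \<Sum>J<dA*dB. \<Sum>a\<in>UNIV. M x a $$ (I div dB, J div dB) * B $$ (I mod dB, J mod dB) * \<rho> $$ (J,I))"
    unfolding mtrace_kron[OF R] by (subst sum.swap, rule sum.cong[OF refl], subst sum.swap, rule refl)
  also have "\<dots> = (\<Sum>I<dA*dB. \<Sum>J<dA*dB. (if I div dB = J div dB then 1 else 0) * B $$ (I mod dB, J mod dB) * \<rho> $$ (J,I))"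
  proof (intro sum.cong refl)
    fix I J assume IJ: "I \<in> {..<dA*dB}" "J \<in> {..<dA*dB}"
    have "(\<Sum>a\<in>UNIV. M x a $$ (I div dB, J div dB) * B $$ (I mod dB, J mod dB) * \<rho> $$ (J,I))
       = (\<Sum>a\<in>UNIV. M x a $$ (I div dB, J div dB)) * B $$ (I mod dB, J mod dB) * \<rho> $$ (J,I)"
      by (simp add: sum_distrib_left sum_distrib_right)
    also have "(\<Sum>a\<in>UNIV. M x a $$ (I div dB, J div dB)) = (if I div dB = J div dB then 1 else 0)"
      using povm_sum[OF M] div_mod_bound IJ by simp
    finally show "(\<Sum>a\<in>UNIV. M x a $$ (I div dB, J div dB) * B $$ (I mod dB, J mod dB) * \<rho> $$ (J,I)) =
      (if I div dB = J div dB then 1 else 0) * B $$ (I mod dB, J mod dB) * \<rho> $$ (J,I)" .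
  qed
  finally show ?thesis .
qed

lemma qbox: assumes M: "povm dA M" and N: "povm dB N" and R: "density (dA*dB) \<rho>"
  defines "q \<equiv> (\<lambda>a b x y. Re (mtrace (kron dA dB (M x a) (N y b) * \<rho>)))"
  shows "(\<forall>a b x y. complex_of_real (q a b x y) = mtrace (kron dA dB (M x a) (N y b) * \<rho>))"
    "no_signalling q" "quantum_box q"
proof -
  have Rc: "\<rho> \<in> carrier_mat (dA*dB) (dA*dB)" using R unfolding density_def psd_def hermitian_def by auto
  have Rp: "psd (dA*dB) \<rho>" using R unfolding density_def by auto
  have real: "complex_of_real (q a b x y) = mtrace (kron dA dB (M x a) (N y b) * \<rho>) \<and> q a b x y \<ge> 0" for a b x y
  proof -
    have "psd dA (M x a)" "psd dB (N y b)" using M N unfolding povm_def by auto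
    from trace_psd_nonneg[OF psd_kron[OF this] Rp] obtain r where
      "r \<ge> 0" "mtrace (kron dA dB (M x a) (N y b) * \<rho>) = complex_of_real r" by auto
    thus ?thesis unfolding q_def by simp
  qed
  thus "\<forall>a b x y. complex_of_real (q a b x y) = mtrace (kron dA dB (M x a) (N y b) * \<rho>)" by blast
  have sB: "(\<Sum>b\<in>UNIV. q a b x y) = Re (\<Sum>I<dA*dB. \<Sum>J<dA*dB. M x a $$ (I div dB, J div dB) * (if I mod dB = J mod dB then 1 else 0) * \<rho> $$ (J,I))" for a x y
    unfolding q_def Re_sum[symmetric] qbox_sumB[OF N Rc] ..
  have sA: "(\<Sum>a\<in>UNIV. q a b x y) = Re (\<Sum>I<dA*dB. \<Sum>J<dA*dB. (if I div dB = J div dB then 1 else 0) * N y b $$ (I mod dB, J mod dB) * \<rho> $$ (J,I))" for b x y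
    unfolding q_def Re_sum[symmetric] qbox_sumA[OF M Rc] ..
  have tot: "(\<Sum>a\<in>UNIV. \<Sum>b\<in>UNIV. q a b x y) = 1" for x y
  proof -
    have "(\<Sum>a\<in>UNIV. \<Sum>b\<in>UNIV. mtrace (kron dA dB (M x a) (N y b) * \<rho>))
      = (\<Sum>a\<in>UNIV. \<Sum>I<dA*dB. \<Sum>J<dA*dB. M x a $$ (I div dB, J div dB) * (if I mod dB = J mod dB then 1 else 0) * \<rho> $$ (J,I))"
      by (intro sum.cong refl) (rule qbox_sumB[OF N Rc])
    also have "\<dots> = (\<Sum>I<dA*dB. \<Sum>J<dA*dB. \<Sum>a\<in>UNIV. M x a $$ (I div dB, J div dB) * (if I mod dB = J mod dB then 1 else 0) * \<rho> $$ (J,I))"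
      by (subst sum.swap, rule sum.cong[OF refl], subst sum.swap, rule refl)
    also have "\<dots> = (\<Sum>I<dA*dB. \<Sum>J<dA*dB. (if J = I then \<rho> $$ (J,I) else 0))"
    proof (intro sum.cong refl)
      fix I J assume IJ: "I \<in> {..<dA*dB}" "J \<in> {..<dA*dB}"
      have "(\<Sum>a\<in>UNIV. M x a $$ (I div dB, J div dB) * (if I mod dB = J mod dB then 1 else 0) * \<rho> $$ (J,I))
        = (\<Sum>a\<in>UNIV. M x a $$ (I div dB, J div dB)) * (if I mod dB = J mod dB then 1 else 0) * \<rho> $$ (J,I)"
        by (simp add: sum_distrib_left sum_distrib_right)
      also have "\<dots> = (if I div dB = J div dB then 1 else 0) * (if I mod dB = J mod dB then 1 else 0) * \<rho> $$ (J,I)"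
        using povm_sum[OF M] div_mod_bound IJ by simp
      also have "\<dots> = (if J = I then \<rho> $$ (J,I) else 0)" by (auto, metis div_mult_mod_eq)
      finally show "(\<Sum>a\<in>UNIV. M x a $$ (I div dB, J div dB) * (if I mod dB = J mod dB then 1 else 0) * \<rho> $$ (J,I))
        = (if J = I then \<rho> $$ (J,I) else 0)" .
    qed
    also have "\<dots> = mtrace \<rho>" unfolding mtrace_def using Rc by simp
    also have "\<dots> = 1" using R unfolding density_def by simp
    finally have "(\<Sum>a\<in>UNIV. \<Sum>b\<in>UNIV. mtrace (kron dA dB (M x a) (N y b) * \<rho>)) = 1" .
    hence "Re (\<Sum>a\<in>UNIV. \<Sum>b\<in>UNIV. mtrace (kron dA dB (M x a) (N y b) * \<rho>)) = 1" by simp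
    thus ?thesis unfolding q_def by (simp add: Re_sum)
  qed
  show "no_signalling q" unfolding no_signalling_def using real tot sA sB by auto
  show "quantum_box q" unfolding quantum_box_def realizes_def
    using R M N real by blast
qed

lemma core: assumes re: "realizes dA dB Op p" and Opc: "Op \<in> carrier_mat (dA*dB) (dA*dB)"
  and R1: "density (dA*dB) \<rho>1" and R2: "density (dA*dB) \<rho>2" and t: "t \<ge> 0"
  and eq: "\<forall>i<dA*dB. \<forall>j<dA*dB. Op $$ (i,j) = complex_of_real (1 + t) * \<rho>1 $$ (i,j) - complex_of_real t * \<rho>2 $$ (i,j)"
  shows "\<exists>q1 q2. quantum_box q1 \<and> quantum_box q2 \<and> no_signalling q1 \<and> no_signalling q2 \<and>
     (\<forall>a b x y. p a b x y = (1 + t) * q1 a b x y - t * q2 a b x y)"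
proof -
  obtain M N where M: "povm dA M" and N: "povm dB N"
    and pe: "\<forall>a b x y. complex_of_real (p a b x y) = mtrace (kron dA dB (M x a) (N y b) * Op)"
    using re unfolding realizes_def by auto
  define q1 where "q1 = (\<lambda>a b x y. Re (mtrace (kron dA dB (M x a) (N y b) * \<rho>1)))"
  define q2 where "q2 = (\<lambda>a b x y. Re (mtrace (kron dA dB (M x a) (N y b) * \<rho>2)))"
  note Q1 = qbox[OF M N R1] and Q2 = qbox[OF M N R2]
  have R1c: "\<rho>1 \<in> carrier_mat (dA*dB) (dA*dB)" using R1 unfolding density_def psd_def hermitian_def by auto
  have R2c: "\<rho>2 \<in> carrier_mat (dA*dB) (dA*dB)" using R2 unfolding density_def psd_def hermitian_def by auto
  have "p a b x y = (1 + t) * q1 a b x y - t * q2 a b x y" for a b x y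
  proof -
    let ?K = "kron dA dB (M x a) (N y b)"
    have "complex_of_real (p a b x y) = (\<Sum>I<dA*dB. \<Sum>J<dA*dB. ?K $$ (I,J) * Op $$ (J,I))"
      using pe mtrace_mult[OF kron_carrier Opc] by simp
    also have "\<dots> = complex_of_real (1 + t) * (\<Sum>I<dA*dB. \<Sum>J<dA*dB. ?K $$ (I,J) * \<rho>1 $$ (J,I))
        - complex_of_real t * (\<Sum>I<dA*dB. \<Sum>J<dA*dB. ?K $$ (I,J) * \<rho>2 $$ (J,I))"
      unfolding sum_distrib_left sum_subtractf[symmetric]
      by (intro sum.cong refl) (simp add: eq algebra_simps)
    also have "\<dots> = complex_of_real (1 + t) * complex_of_real (q1 a b x y) - complex_of_real t * complex_of_real (q2 a b x y)"
    proof -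
      have "complex_of_real (q1 a b x y) = (\<Sum>I<dA*dB. \<Sum>J<dA*dB. ?K $$ (I,J) * \<rho>1 $$ (J,I))"
        unfolding q1_def using Q1(1)[rule_format, of x a y b] mtrace_mult[OF kron_carrier R1c] by simp
      moreover have "complex_of_real (q2 a b x y) = (\<Sum>I<dA*dB. \<Sum>J<dA*dB. ?K $$ (I,J) * \<rho>2 $$ (J,I))"
        unfolding q2_def using Q2(1)[rule_format, of x a y b] mtrace_mult[OF kron_carrier R2c] by simp
      ultimately show ?thesis by simp
    qed
    finally have "complex_of_real (p a b x y) = complex_of_real ((1 + t) * q1 a b x y - t * q2 a b x y)" by simp
    thus ?thesis using of_real_eq_iff by blast
  qed
  moreover have "quantum_box q1 \<and> quantum_box q2 \<and> no_signalling q1 \<and> no_signalling q2"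
    using Q1 Q2 unfolding q1_def q2_def by blast
  ultimately show ?thesis by blast
qed



definition dl :: "'u \<Rightarrow> 'v \<Rightarrow> 'u \<Rightarrow> 'v::finite \<Rightarrow> real" where
  "dl u0 v0 u v = (if u = u0 then (if v = v0 then 1 else 0) else 1 / real (card (UNIV :: 'v set)))"

lemma dl_nonneg: "dl u0 v0 u v \<ge> 0" unfolding dl_def by auto

lemma card_UNIV_pos: "real (card (UNIV :: 'v::finite set)) > 0"
  by (simp add: card_gt_0_iff)

lemma dl_sum: "(\<Sum>v\<in>UNIV. dl u0 v0 u (v::'v::finite)) = 1"
proof (cases "u = u0")
  case True thus ?thesis unfolding dl_def by simp
next
  case False thus ?thesis unfolding dl_def using card_UNIV_pos[where 'v='v] by simp
qed

lemma cond_dist_dl: "cond_dist (\<lambda>u v. dl u0 v0 u (v::'v::finite))"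
  unfolding cond_dist_def using dl_nonneg dl_sum by auto

lemma dl_oneD: fixes \<phi> :: "'u::finite \<Rightarrow> 'v::finite \<Rightarrow> real"
  shows "(\<Sum>u0\<in>UNIV. \<Sum>v0\<in>UNIV. \<phi> u0 v0 * dl u0 v0 u v) =
    \<phi> u v + (1 / real (card (UNIV :: 'v set))) * ((\<Sum>u0\<in>UNIV. \<Sum>v0\<in>UNIV. \<phi> u0 v0) - (\<Sum>v0\<in>UNIV. \<phi> u v0))"
proof -
  define F where "F u0 = (\<Sum>v0\<in>UNIV. \<phi> u0 v0 * dl u0 v0 u v)" for u0
  define G where "G u0 = (\<Sum>v0\<in>UNIV. \<phi> u0 v0)" for u0
  have "\<phi> u v0 * dl u v0 u v = (if v0 = v then \<phi> u v else 0)" for v0 unfolding dl_def by auto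
  hence Fu: "F u = \<phi> u v" unfolding F_def by simp
  have Fo: "F u0 = G u0 / real (card (UNIV :: 'v set))" if "u0 \<noteq> u" for u0
    using that unfolding F_def G_def dl_def by (simp add: sum_divide_distrib)
  have "(\<Sum>u0\<in>UNIV. F u0) = F u + (\<Sum>u0\<in>UNIV - {u}. F u0)" by (simp add: sum.remove)
  also have "(\<Sum>u0\<in>UNIV - {u}. F u0) = (\<Sum>u0\<in>UNIV - {u}. G u0 / real (card (UNIV :: 'v set)))" by (intro sum.cong) (auto simp: Fo)
  also have "\<dots> = ((\<Sum>u0\<in>UNIV. G u0) - G u) / real (card (UNIV :: 'v set))"
    by (simp add: sum_divide_distrib[symmetric] sum_diff1)
  finally show ?thesis unfolding F_def[symmetric] G_def[symmetric] Fu by simp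
qed

definition pA :: "('a::finite \<Rightarrow> 'b::finite \<Rightarrow> 'x::finite \<Rightarrow> 'y::finite \<Rightarrow> real) \<Rightarrow> 'a \<Rightarrow> 'x \<Rightarrow> real" where
  "pA p a x = (\<Sum>b\<in>UNIV. p a b x undefined)"
definition pB :: "('a::finite \<Rightarrow> 'b::finite \<Rightarrow> 'x::finite \<Rightarrow> 'y::finite \<Rightarrow> real) \<Rightarrow> 'b \<Rightarrow> 'y \<Rightarrow> real" where
  "pB p b y = (\<Sum>a\<in>UNIV. p a b undefined y)"

definition alB :: "('a::finite \<Rightarrow> 'b::finite \<Rightarrow> 'x::finite \<Rightarrow> 'y::finite \<Rightarrow> real) \<Rightarrow> real" where
  "alB p = (real (card (UNIV::'y set)) - 1) / (real (card (UNIV::'y set)) * real (card (UNIV::'b set)))"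
definition beA :: "('a::finite \<Rightarrow> 'b::finite \<Rightarrow> 'x::finite \<Rightarrow> 'y::finite \<Rightarrow> real) \<Rightarrow> real" where
  "beA p = (real (card (UNIV::'x set)) - 1) / (real (card (UNIV::'x set)) * real (card (UNIV::'a set)))"

definition Cf :: "('a::finite \<Rightarrow> 'b::finite \<Rightarrow> 'x::finite \<Rightarrow> 'y::finite \<Rightarrow> real) \<Rightarrow> 'x \<Rightarrow> 'a \<Rightarrow> 'y \<Rightarrow> 'b \<Rightarrow> real" where
  "Cf p x0 a0 y0 b0 = p a0 b0 x0 y0 - alB p * pA p a0 x0 - beA p * pB p b0 y0 + alB p * beA p"

lemma ns_B: "no_signalling p \<Longrightarrow> (\<Sum>b\<in>UNIV. p a b x y) = pA p a x"
  unfolding no_signalling_def pA_def by metis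
lemma ns_A: "no_signalling p \<Longrightarrow> (\<Sum>a\<in>UNIV. p a b x y) = pB p b y"
  unfolding no_signalling_def pB_def by metis
lemma sum_pB: "no_signalling p \<Longrightarrow> (\<Sum>b\<in>UNIV. pB p b y) = 1"
  unfolding pB_def no_signalling_def by (subst sum.swap) simp
lemma sum_pA: "no_signalling p \<Longrightarrow> (\<Sum>a\<in>UNIV. pA p a x) = 1"
  unfolding pA_def no_signalling_def by simp

lemma stepB: fixes p :: "'a::finite \<Rightarrow> 'b::finite \<Rightarrow> 'x::finite \<Rightarrow> 'y::finite \<Rightarrow> real"
  assumes ns: "no_signalling p"
  shows "(\<Sum>y0\<in>UNIV. \<Sum>b0\<in>UNIV. Cf p x0 a0 y0 b0 * dl y0 b0 y b) = p a0 b x0 y - beA p * pB p b y"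
proof -
  define nB where "nB = real (card (UNIV::'b set))"
  define nY where "nY = real (card (UNIV::'y set))"
  have nB: "nB > 0" unfolding nB_def by (rule card_UNIV_pos)
  have nY: "nY > 0" unfolding nY_def by (rule card_UNIV_pos)
  define R where "R = pA p a0 x0 - nB * alB p * pA p a0 x0 - beA p + nB * alB p * beA p"
  have row: "(\<Sum>b0\<in>UNIV. Cf p x0 a0 y0 b0) = R" for y0
    unfolding Cf_def R_def nB_def
    by (simp add: sum.distrib sum_subtractf sum_distrib_left[symmetric] ns_B[OF ns] sum_pB[OF ns])
  have tot: "(\<Sum>y0\<in>UNIV. \<Sum>b0\<in>UNIV. Cf p x0 a0 y0 b0) = nY * R" unfolding row nY_def by simp
  have "(\<Sum>y0\<in>UNIV. \<Sum>b0\<in>UNIV. Cf p x0 a0 y0 b0 * dl y0 b0 y b) = Cf p x0 a0 y b + (1 / nB) * (nY * R - R)"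
    unfolding dl_oneD tot row by (simp add: nB_def nY_def)
  also have "\<dots> = p a0 b x0 y - beA p * pB p b y"
    unfolding Cf_def R_def alB_def nB_def[symmetric] nY_def[symmetric] using nB nY by (simp add: field_simps)
  finally show ?thesis .
qed

lemma stepA: fixes p :: "'a::finite \<Rightarrow> 'b::finite \<Rightarrow> 'x::finite \<Rightarrow> 'y::finite \<Rightarrow> real"
  assumes ns: "no_signalling p"
  shows "(\<Sum>x0\<in>UNIV. \<Sum>a0\<in>UNIV. (p a0 b x0 y - beA p * pB p b y) * dl x0 a0 x a) = p a b x y"
proof -
  define nA where "nA = real (card (UNIV::'a set))"
  define nX where "nX = real (card (UNIV::'x set))"
  have nA: "nA > 0" unfolding nA_def by (rule card_UNIV_pos)
  have nX: "nX > 0" unfolding nX_def by (rule card_UNIV_pos)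
  define R where "R = pB p b y - nA * beA p * pB p b y"
  have row: "(\<Sum>a0\<in>UNIV. p a0 b x0 y - beA p * pB p b y) = R" for x0
    unfolding R_def nA_def by (simp add: sum_subtractf ns_A[OF ns])
  have tot: "(\<Sum>x0\<in>UNIV. \<Sum>a0\<in>UNIV. p a0 b x0 y - beA p * pB p b y) = nX * R" unfolding row nX_def by simp
  have "(\<Sum>x0\<in>UNIV. \<Sum>a0\<in>UNIV. (p a0 b x0 y - beA p * pB p b y) * dl x0 a0 x a) = (p a b x y - beA p * pB p b y) + (1 / nA) * (nX * R - R)"
    unfolding dl_oneD tot row by (simp add: nA_def nX_def)
  also have "\<dots> = p a b x y"
    unfolding R_def beA_def nA_def[symmetric] nX_def[symmetric] using nA nX by (simp add: field_simps)
  finally show ?thesis .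
qed

lemma ns_decomp: fixes p :: "'a::finite \<Rightarrow> 'b::finite \<Rightarrow> 'x::finite \<Rightarrow> 'y::finite \<Rightarrow> real"
  assumes ns: "no_signalling p"
  shows "p a b x y = (\<Sum>x0\<in>UNIV. \<Sum>a0\<in>UNIV. \<Sum>y0\<in>UNIV. \<Sum>b0\<in>UNIV. Cf p x0 a0 y0 b0 * (dl x0 a0 x a * dl y0 b0 y b))"
proof -
  have "(\<Sum>x0\<in>UNIV. \<Sum>a0\<in>UNIV. \<Sum>y0\<in>UNIV. \<Sum>b0\<in>UNIV. Cf p x0 a0 y0 b0 * (dl x0 a0 x a * dl y0 b0 y b))
    = (\<Sum>x0\<in>UNIV. \<Sum>a0\<in>UNIV. (\<Sum>y0\<in>UNIV. \<Sum>b0\<in>UNIV. Cf p x0 a0 y0 b0 * dl y0 b0 y b) * dl x0 a0 x a)"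
    by (simp add: sum_distrib_right sum_distrib_left mult_ac)
  also have "\<dots> = p a b x y" unfolding stepB[OF ns] stepA[OF ns] ..
  finally show ?thesis by simp
qed

lemma sum_UNIV_pair: "(\<Sum>z\<in>UNIV. g z) = (\<Sum>u\<in>UNIV. \<Sum>v\<in>UNIV. (g (u,v) :: real))"
proof -
  have "(\<Sum>u\<in>UNIV. \<Sum>v\<in>UNIV. g (u,v)) = (\<Sum>(u,v)\<in>UNIV \<times> UNIV. g (u,v))" by (rule sum.cartesian_product)
  also have "\<dots> = (\<Sum>z\<in>UNIV. g z)" by (simp add: case_prod_unfold)
  finally show ?thesis ..
qed

definition Cz :: "('a::finite \<Rightarrow> 'b::finite \<Rightarrow> 'x::finite \<Rightarrow> 'y::finite \<Rightarrow> real) \<Rightarrow> ('x \<times> 'a) \<times> ('y \<times> 'b) \<Rightarrow> real" where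
  "Cz p z = Cf p (fst (fst z)) (snd (fst z)) (fst (snd z)) (snd (snd z))"
definition Dz :: "('x::finite \<times> 'a::finite) \<times> ('y::finite \<times> 'b::finite) \<Rightarrow> 'a \<Rightarrow> 'b \<Rightarrow> 'x \<Rightarrow> 'y \<Rightarrow> real" where
  "Dz z a b x y = dl (fst (fst z)) (snd (fst z)) x a * dl (fst (snd z)) (snd (snd z)) y b"

lemma ns_decomp_z: fixes p :: "'a::finite \<Rightarrow> 'b::finite \<Rightarrow> 'x::finite \<Rightarrow> 'y::finite \<Rightarrow> real"
  assumes ns: "no_signalling p"
  shows "p a b x y = (\<Sum>z\<in>UNIV. Cz p z * Dz z a b x y)"
  unfolding ns_decomp[OF ns, of a b x y] Cz_def Dz_def
  by (subst sum_UNIV_pair, subst sum_UNIV_pair, subst sum_UNIV_pair) simp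

lemma Dz_sum: "(\<Sum>a\<in>UNIV. \<Sum>b\<in>UNIV. Dz z a b x y) = 1"
  unfolding Dz_def by (simp add: sum_distrib_left[symmetric] sum_distrib_right[symmetric] dl_sum)

lemma local_Dz: "local_box (Dz z)"
  unfolding local_box_def
  apply (rule exI[of _ 1], rule exI[of _ "\<lambda>_. 1"],
     rule exI[of _ "\<lambda>_ x a. dl (fst (fst z)) (snd (fst z)) x a"], rule exI[of _ "\<lambda>_ y b. dl (fst (snd z)) (snd (snd z)) y b"])
  by (auto simp: cond_dist_dl Dz_def)

lemma sum_Cz: fixes p :: "'a::finite \<Rightarrow> 'b::finite \<Rightarrow> 'x::finite \<Rightarrow> 'y::finite \<Rightarrow> real"
  assumes ns: "no_signalling p"
  shows "(\<Sum>z\<in>UNIV. Cz p z) = 1"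
proof -
  have "1 = (\<Sum>a\<in>UNIV. \<Sum>b\<in>UNIV. p a b undefined undefined)" using ns unfolding no_signalling_def by simp
  also have "\<dots> = (\<Sum>a\<in>UNIV. \<Sum>b\<in>UNIV. \<Sum>z\<in>UNIV. Cz p z * Dz z a b undefined undefined)"
    using ns_decomp_z[OF ns] by simp
  also have "\<dots> = (\<Sum>z\<in>UNIV. Cz p z * (\<Sum>a\<in>UNIV. \<Sum>b\<in>UNIV. Dz z a b undefined undefined))"
  proof -
    have "(\<Sum>a\<in>UNIV. \<Sum>b\<in>UNIV. \<Sum>z\<in>UNIV. Cz p z * Dz z a b undefined undefined)
      = (\<Sum>a\<in>UNIV. \<Sum>z\<in>UNIV. \<Sum>b\<in>UNIV. Cz p z * Dz z a b undefined undefined)"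
      by (rule sum.cong[OF refl], rule sum.swap)
    also have "\<dots> = (\<Sum>z\<in>UNIV. \<Sum>a\<in>UNIV. \<Sum>b\<in>UNIV. Cz p z * Dz z a b undefined undefined)"
      by (rule sum.swap)
    finally show ?thesis by (simp add: sum_distrib_left)
  qed
  also have "\<dots> = (\<Sum>z\<in>UNIV. Cz p z)" by (simp add: Dz_sum)
  finally show ?thesis ..
qed

lemma ns_bounds: assumes ns: "no_signalling p"
  shows "0 \<le> p a b x y" "p a b x y \<le> 1" "0 \<le> pA p a x" "pA p a x \<le> 1" "0 \<le> pB p b y" "pB p b y \<le> 1"
proof -
  have nn: "\<And>a b x y. 0 \<le> p a b x y" using ns unfolding no_signalling_def by auto
  show "0 \<le> p a b x y" by (rule nn)
  have "p a b x y \<le> (\<Sum>b\<in>UNIV. p a b x y)" by (rule member_le_sum) (auto intro: nn)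
  also have "\<dots> \<le> (\<Sum>a\<in>UNIV. \<Sum>b\<in>UNIV. p a b x y)" by (rule member_le_sum[where f="\<lambda>a. \<Sum>b\<in>UNIV. p a b x y"]) (auto intro: nn sum_nonneg)
  finally show "p a b x y \<le> 1" using ns unfolding no_signalling_def by simp
  show "0 \<le> pA p a x" unfolding pA_def by (auto intro: nn sum_nonneg)
  have "pA p a x \<le> (\<Sum>a\<in>UNIV. pA p a x)" by (rule member_le_sum) (auto simp: pA_def intro: nn sum_nonneg)
  thus "pA p a x \<le> 1" using sum_pA[OF ns] by simp
  show "0 \<le> pB p b y" unfolding pB_def by (auto intro: nn sum_nonneg)
  have "pB p b y \<le> (\<Sum>b\<in>UNIV. pB p b y)" by (rule member_le_sum) (auto simp: pB_def intro: nn sum_nonneg)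
  thus "pB p b y \<le> 1" using sum_pB[OF ns] by simp
qed

lemma coef_bounds: fixes p :: "'a::finite \<Rightarrow> 'b::finite \<Rightarrow> 'x::finite \<Rightarrow> 'y::finite \<Rightarrow> real"
  shows "0 \<le> alB p" "alB p \<le> 1" "0 \<le> beA p" "beA p \<le> 1"
proof -
  have c: "real (card (UNIV :: 'v::finite set)) \<ge> 1" if "(u :: 'v) = u" for u
    using card_UNIV_pos[where 'v='v] by (simp add: card_gt_0_iff Suc_le_eq)
  let ?nA = "real (card (UNIV::'a set))" and ?nB = "real (card (UNIV::'b set))"
    and ?nX = "real (card (UNIV::'x set))" and ?nY = "real (card (UNIV::'y set))"
  have h: "0 \<le> (n - 1) / (n * m) \<and> (n - 1) / (n * m) \<le> 1" if "n \<ge> 1" "m \<ge> 1" for n m :: real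
  proof -
    have "n - 1 \<le> n * m" using that by (smt (verit) mult_le_cancel_left1)
    thus ?thesis using that by (auto simp: divide_le_eq)
  qed
  show "0 \<le> alB p" "alB p \<le> 1" unfolding alB_def using h[OF c[of "undefined::'y"] c[of "undefined::'b"]] by auto
  show "0 \<le> beA p" "beA p \<le> 1" unfolding beA_def using h[OF c[of "undefined::'x"] c[of "undefined::'a"]] by auto
qed

lemma Cz_bound: assumes ns: "no_signalling p" shows "\<bar>Cz p z\<bar> \<le> 4"
proof -
  obtain x0 a0 y0 b0 where z: "z = ((x0,a0),(y0,b0))" by (metis prod.collapse)
  note b = ns_bounds(1,2)[OF ns, of a0 b0 x0 y0] ns_bounds(3,4)[OF ns, of a0 x0] ns_bounds(5,6)[OF ns, of b0 y0] coef_bounds[of p]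
  have "\<bar>alB p * pA p a0 x0\<bar> \<le> 1" using b by (simp add: abs_mult mult_le_one)
  moreover have "\<bar>beA p * pB p b0 y0\<bar> \<le> 1" using b by (simp add: abs_mult mult_le_one)
  moreover have "\<bar>alB p * beA p\<bar> \<le> 1" using b by (simp add: abs_mult mult_le_one)
  moreover have "\<bar>p a0 b0 x0 y0\<bar> \<le> 1" using b by simp
  ultimately show ?thesis unfolding Cz_def Cf_def z by simp
qed

lemma bij_enum: "\<exists>h. bij_betw h {..<card (UNIV :: 'z::finite set)} (UNIV :: 'z set)"
  using ex_bij_betw_nat_finite[of "UNIV :: 'z set"] by (auto simp: atLeast0LessThan)

lemma bL_elem: fixes p :: "'a::finite \<Rightarrow> 'b::finite \<Rightarrow> 'x::finite \<Rightarrow> 'y::finite \<Rightarrow> real"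
  assumes ns: "no_signalling p"
  shows "\<exists>(n::nat) c ps. (\<forall>i<n. local_box (ps i)) \<and> (\<Sum>i<n. c i) = 1 \<and>
    (\<forall>a b x y. p a b x y = (\<Sum>i<n. c i * ps i a b x y)) \<and>
    (\<Sum>i<n. \<bar>c i\<bar>) \<le> 4 * real (card (UNIV :: (('x \<times> 'a) \<times> ('y \<times> 'b)) set))"
proof -
  let ?N = "card (UNIV :: (('x \<times> 'a) \<times> ('y \<times> 'b)) set)"
  obtain h where h: "bij_betw h {..<?N} (UNIV :: (('x \<times> 'a) \<times> ('y \<times> 'b)) set)" using bij_enum by blast
  have re: "(\<Sum>i<?N. g (h i)) = (\<Sum>z\<in>UNIV. g z)" for g :: "_ \<Rightarrow> real"
    using sum.reindex_bij_betw[OF h, of g] by simp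
  have "\<forall>i<?N. local_box (Dz (h i))" by (simp add: local_Dz)
  moreover have "(\<Sum>i<?N. Cz p (h i)) = 1" unfolding re using sum_Cz[OF ns] .
  moreover have "\<forall>a b x y. p a b x y = (\<Sum>i<?N. Cz p (h i) * Dz (h i) a b x y)"
  proof (intro allI)
    fix a b x y show "p a b x y = (\<Sum>i<?N. Cz p (h i) * Dz (h i) a b x y)"
      using ns_decomp_z[OF ns, of a b x y] re[of "\<lambda>z. Cz p z * Dz z a b x y"] by simp
  qed
  moreover have "(\<Sum>i<?N. \<bar>Cz p (h i)\<bar>) \<le> 4 * real ?N"
  proof -
    have "(\<Sum>i<?N. \<bar>Cz p (h i)\<bar>) \<le> (\<Sum>i<?N. 4)" by (intro sum_mono Cz_bound[OF ns])
    thus ?thesis by simp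
  qed
  ultimately show ?thesis
    apply -
    apply (rule exI[where x="card (UNIV :: (('x \<times> 'a) \<times> ('y \<times> 'b)) set)"], rule exI[where x="\<lambda>i. Cz p (h i)"], rule exI[where x="\<lambda>i. Dz (h i)"])
    by simp
qed

lemma psd_dmat: assumes "\<And>k. k < n \<Longrightarrow> d k \<ge> 0" shows "psd n (dmat n d)"
  using psd_udu[OF one_carrier_mat[of n] assms] by simp

lemma hermitian_dmat: "hermitian n (dmat n d)"
  using hermitian_udu[OF one_carrier_mat[of n]] by simp

lemma mtrace_dmat: "mtrace (dmat n d) = complex_of_real (\<Sum>i<n. d i)"
  unfolding mtrace_def by (simp add: dmat_def)

lemma realize_ns: fixes p :: "'a::finite \<Rightarrow> 'b::finite \<Rightarrow> 'x::finite \<Rightarrow> 'y::finite \<Rightarrow> real"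
  assumes ns: "no_signalling p"
  shows "\<exists>dA dB Op. pseudo_state (dA * dB) Op \<and> realizes dA dB Op p"
proof -
  let ?dA = "card (UNIV :: ('x \<times> 'a) set)" and ?dB = "card (UNIV :: ('y \<times> 'b) set)"
  obtain hA where hA: "bij_betw hA {..<?dA} (UNIV :: ('x \<times> 'a) set)" using bij_enum by blast
  obtain hB where hB: "bij_betw hB {..<?dB} (UNIV :: ('y \<times> 'b) set)" using bij_enum by blast
  have reA: "(\<Sum>i<?dA. g (hA i)) = (\<Sum>z\<in>UNIV. g z)" for g :: "_ \<Rightarrow> real"
    using sum.reindex_bij_betw[OF hA, of g] by simp
  have reB: "(\<Sum>i<?dB. g (hB i)) = (\<Sum>z\<in>UNIV. g z)" for g :: "_ \<Rightarrow> real"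
    using sum.reindex_bij_betw[OF hB, of g] by simp
  define mA where "mA x a i = dl (fst (hA i)) (snd (hA i)) x a" for x a i
  define mB where "mB y b j = dl (fst (hB j)) (snd (hB j)) y b" for y b j
  define M where "M x a = dmat ?dA (mA x a)" for x a
  define N where "N y b = dmat ?dB (mB y b)" for y b
  define e where "e I = Cz p (hA (I div ?dB), hB (I mod ?dB))" for I
  define Op where "Op = dmat (?dA * ?dB) e"
  have pair: "(\<Sum>I<?dA * ?dB. g (I div ?dB) (I mod ?dB)) = (\<Sum>u\<in>UNIV. \<Sum>v\<in>UNIV. g' u v)"
    if "\<And>i j. g i j = g' (hA i) (hB j)" for g :: "nat \<Rightarrow> nat \<Rightarrow> real" and g'
  proof -
    have "(\<Sum>I<?dA * ?dB. g (I div ?dB) (I mod ?dB)) = (\<Sum>i<?dA. \<Sum>j<?dB. g i j)"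
      unfolding sum_pair by (intro sum.cong refl) auto
    also have "\<dots> = (\<Sum>i<?dA. \<Sum>v\<in>UNIV. g' (hA i) v)" unfolding that reB ..
    also have "\<dots> = (\<Sum>u\<in>UNIV. \<Sum>v\<in>UNIV. g' u v)" by (rule reA)
    finally show ?thesis .
  qed
  have povmA: "povm ?dA M"
    unfolding povm_def
  proof (intro conjI allI impI)
    fix x a show "psd ?dA (M x a)" unfolding M_def mA_def by (rule psd_dmat) (simp add: dl_nonneg)
  next
    fix x i j assume ij: "i < ?dA" "j < ?dA"
    show "(\<Sum>a\<in>UNIV. M x a $$ (i,j)) = (if i = j then 1 else 0)"
      using ij by (simp add: M_def dmat_def mA_def dl_sum flip: of_real_sum)
  qed
  have povmB: "povm ?dB N"
    unfolding povm_def
  proof (intro conjI allI impI)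
    fix y b show "psd ?dB (N y b)" unfolding N_def mB_def by (rule psd_dmat) (simp add: dl_nonneg)
  next
    fix y i j assume ij: "i < ?dB" "j < ?dB"
    show "(\<Sum>b\<in>UNIV. N y b $$ (i,j)) = (if i = j then 1 else 0)"
      using ij by (simp add: N_def dmat_def mB_def dl_sum flip: of_real_sum)
  qed
  have "(\<Sum>I<?dA * ?dB. e I) = (\<Sum>u\<in>UNIV. \<Sum>v\<in>UNIV. Cz p (u,v))"
    unfolding e_def by (rule pair) simp
  also have "\<dots> = 1" using sum_Cz[OF ns] sum_UNIV_pair[of "Cz p"] by simp
  finally have tr: "(\<Sum>I<?dA * ?dB. e I) = 1" .
  have "mtrace Op = 1" by (simp only: Op_def mtrace_dmat tr) simp
  hence ps: "pseudo_state (?dA * ?dB) Op" unfolding pseudo_state_def Op_def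
    using hermitian_dmat by simp
  have "complex_of_real (p a b x y) = mtrace (kron ?dA ?dB (M x a) (N y b) * Op)" for a b x y
  proof -
    have "kron ?dA ?dB (M x a) (N y b) * Op = dmat (?dA * ?dB) (\<lambda>I. mA x a (I div ?dB) * mB y b (I mod ?dB) * e I)"
      unfolding M_def N_def Op_def kron_dmat dmat_mult ..
    hence "mtrace (kron ?dA ?dB (M x a) (N y b) * Op) = complex_of_real (\<Sum>I<?dA * ?dB. mA x a (I div ?dB) * mB y b (I mod ?dB) * e I)"
      by (simp add: mtrace_dmat)
    also have "(\<Sum>I<?dA * ?dB. mA x a (I div ?dB) * mB y b (I mod ?dB) * e I) = (\<Sum>u\<in>UNIV. \<Sum>v\<in>UNIV. Cz p (u,v) * Dz (u,v) a b x y)"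
      unfolding e_def by (rule pair) (simp add: mA_def mB_def Dz_def)
    also have "\<dots> = p a b x y" using ns_decomp_z[OF ns, of a b x y] sum_UNIV_pair[of "\<lambda>z. Cz p z * Dz z a b x y"] by simp
    finally show ?thesis by simp
  qed
  hence "realizes ?dA ?dB Op p" unfolding realizes_def using povmA povmB by blast
  thus ?thesis using ps by blast
qed



definition bLset :: "('a::finite \<Rightarrow> 'b::finite \<Rightarrow> 'x::finite \<Rightarrow> 'y::finite \<Rightarrow> real) \<Rightarrow> real set" where
  "bLset p = {(\<Sum>i<n. \<bar>c i\<bar>) | (n::nat) c ps.
      (\<forall>i<n. local_box (ps i)) \<and> (\<Sum>i<n. c i) = 1 \<and>
      (\<forall>a b x y. p a b x y = (\<Sum>i<n. c i * ps i a b x y))}"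

lemma b_L_eq: "b_L p = Inf (bLset p)" unfolding b_L_def bLset_def ..

lemma bLset_ge1: assumes "s \<in> bLset p" shows "s \<ge> 1"
proof -
  obtain n :: nat and c where e: "s = (\<Sum>i<n. \<bar>c i\<bar>)" "(\<Sum>i<n. c i) = 1"
    using assms unfolding bLset_def by blast
  have "\<bar>\<Sum>i<n. c i\<bar> \<le> (\<Sum>i<n. \<bar>c i\<bar>)" by (rule sum_abs)
  thus ?thesis using e by simp
qed

lemma bLset_nonneg: "s \<in> bLset p \<Longrightarrow> s \<ge> 0"
  using bLset_ge1 by fastforce

lemma bdd_bLset: "bdd_below (bLset p)"
  unfolding bdd_below_def using bLset_nonneg by blast

lemma bL_props: fixes p :: "'a::finite \<Rightarrow> 'b::finite \<Rightarrow> 'x::finite \<Rightarrow> 'y::finite \<Rightarrow> real"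
  assumes ns: "no_signalling p"
  shows "bLset p \<noteq> {}" "1 \<le> b_L p" "b_L p \<le> 4 * real (card (UNIV :: (('x \<times> 'a) \<times> ('y \<times> 'b)) set))"
proof -
  obtain n c ps where e: "(\<forall>i<(n::nat). local_box (ps i))" "(\<Sum>i<n. c i) = 1"
    "(\<forall>a b x y. p a b x y = (\<Sum>i<n. c i * ps i a b x y))"
    "(\<Sum>i<n. \<bar>c i\<bar>) \<le> 4 * real (card (UNIV :: (('x \<times> 'a) \<times> ('y \<times> 'b)) set))"
    using bL_elem[OF ns] by blast
  have m: "(\<Sum>i<n. \<bar>c i\<bar>) \<in> bLset p" unfolding bLset_def using e(1-3) by blast
  thus "bLset p \<noteq> {}" by auto
  show "1 \<le> b_L p" unfolding b_L_eq using m bLset_ge1 by (intro cInf_greatest) auto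
  have "b_L p \<le> (\<Sum>i<n. \<bar>c i\<bar>)" unfolding b_L_eq by (rule cInf_lower[OF m bdd_bLset])
  thus "b_L p \<le> 4 * real (card (UNIV :: (('x \<times> 'a) \<times> ('y \<times> 'b)) set))" using e(4) by simp
qed

lemma sum_split_add: "(\<Sum>i<n1 + n2. f i) = (\<Sum>i<n1. f i) + (\<Sum>i<n2. f (n1 + i))" for f :: "nat \<Rightarrow> real"
  by (induct n2) (auto simp: add_Suc_right)


lemma bLset_comb: fixes p :: "'a::finite \<Rightarrow> 'b::finite \<Rightarrow> 'x::finite \<Rightarrow> 'y::finite \<Rightarrow> real"
  assumes t: "t \<ge> 0" and pe: "\<forall>a b x y. p a b x y = (1 + t) * q1 a b x y - t * q2 a b x y"
    and s1: "s1 \<in> bLset q1" and s2: "s2 \<in> bLset q2"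
  shows "(1 + t) * s1 + t * s2 \<in> bLset p"
proof -
  obtain n1 c1 ps1 where e1: "s1 = (\<Sum>i<(n1::nat). \<bar>c1 i\<bar>)" "\<forall>i<n1. local_box (ps1 i)" "(\<Sum>i<n1. c1 i) = 1"
    "\<forall>a b x y. q1 a b x y = (\<Sum>i<n1. c1 i * ps1 i a b x y)" using s1 unfolding bLset_def by blast
  obtain n2 c2 ps2 where e2: "s2 = (\<Sum>i<(n2::nat). \<bar>c2 i\<bar>)" "\<forall>i<n2. local_box (ps2 i)" "(\<Sum>i<n2. c2 i) = 1"
    "\<forall>a b x y. q2 a b x y = (\<Sum>i<n2. c2 i * ps2 i a b x y)" using s2 unfolding bLset_def by blast
  define c where "c i = (if i < n1 then (1 + t) * c1 i else - t * c2 (i - n1))" for i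
  define ps where "ps i = (if i < n1 then ps1 i else ps2 (i - n1))" for i
  have c1: "\<And>i. i \<in> {..<n1} \<Longrightarrow> c i = (1 + t) * c1 i" and c2: "\<And>i. c (n1 + i) = - t * c2 i"
    unfolding c_def by auto
  have p1: "\<And>i. i \<in> {..<n1} \<Longrightarrow> ps i = ps1 i" and p2: "\<And>i. ps (n1 + i) = ps2 i"
    unfolding ps_def by auto
  have "\<forall>i<n1 + n2. local_box (ps i)" unfolding ps_def using e1(2) e2(2) by auto
  moreover have "(\<Sum>i<n1 + n2. c i) = 1"
  proof -
    have "(\<Sum>i<n1 + n2. c i) = (\<Sum>i<n1. (1 + t) * c1 i) + (\<Sum>i<n2. - t * c2 i)"
      unfolding sum_split_add c2 using c1 by simp
    thus ?thesis using e1(3) e2(3) by (simp add: sum_distrib_left[symmetric] sum_negf)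
  qed
  moreover have "\<forall>a b x y. p a b x y = (\<Sum>i<n1 + n2. c i * ps i a b x y)"
  proof (intro allI)
    fix a b x y
    have "(\<Sum>i<n1 + n2. c i * ps i a b x y) = (\<Sum>i<n1. (1 + t) * c1 i * ps1 i a b x y) + (\<Sum>i<n2. - t * c2 i * ps2 i a b x y)"
      unfolding sum_split_add c2 p2 using c1 p1 by simp
    also have "\<dots> = (1 + t) * q1 a b x y - t * q2 a b x y"
      using e1(4) e2(4) by (simp add: sum_distrib_left mult.assoc sum_negf)
    finally show "p a b x y = (\<Sum>i<n1 + n2. c i * ps i a b x y)" using pe by simp
  qed
  moreover have "(\<Sum>i<n1 + n2. \<bar>c i\<bar>) = (1 + t) * s1 + t * s2"
  proof -
    have "(\<Sum>i<n1 + n2. \<bar>c i\<bar>) = (\<Sum>i<n1. (1 + t) * \<bar>c1 i\<bar>) + (\<Sum>i<n2. t * \<bar>c2 i\<bar>)"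
      unfolding sum_split_add c2 using c1 t by (simp add: abs_mult)
    thus ?thesis unfolding e1(1) e2(1) by (simp add: sum_distrib_left)
  qed
  ultimately show ?thesis unfolding bLset_def mem_Collect_eq
    apply -
    apply (rule exI[where x="n1 + n2"], rule exI[where x=c], rule exI[where x=ps])
    by simp
qed


lemma bL_comb: fixes p :: "'a::finite \<Rightarrow> 'b::finite \<Rightarrow> 'x::finite \<Rightarrow> 'y::finite \<Rightarrow> real"
  assumes t: "t \<ge> 0" and pe: "\<forall>a b x y. p a b x y = (1 + t) * q1 a b x y - t * q2 a b x y"
    and ns1: "no_signalling q1" and ns2: "no_signalling q2"
  shows "b_L p \<le> (1 + t) * b_L q1 + t * b_L q2"
proof -
  have ne1: "bLset q1 \<noteq> {}" and ne2: "bLset q2 \<noteq> {}" using bL_props(1) ns1 ns2 by auto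
  have le: "b_L p \<le> (1 + t) * s1 + t * s2" if "s1 \<in> bLset q1" "s2 \<in> bLset q2" for s1 s2
    unfolding b_L_eq by (rule cInf_lower[OF bLset_comb[OF t pe that] bdd_bLset])
  have le2: "b_L p \<le> (1 + t) * b_L q1 + t * s2" if s2: "s2 \<in> bLset q2" for s2
  proof -
    have "(b_L p - t * s2) / (1 + t) \<le> b_L q1" unfolding b_L_eq(1)[of q1]
    proof (rule cInf_greatest[OF ne1])
      fix s1 assume "s1 \<in> bLset q1"
      from le[OF this s2] show "(b_L p - t * s2) / (1 + t) \<le> s1" using t by (simp add: divide_le_eq algebra_simps)
    qed
    thus ?thesis using t by (simp add: divide_le_eq algebra_simps)
  qed
  show ?thesis
  proof (cases "t = 0")
    case True
    obtain s2 where "s2 \<in> bLset q2" using ne2 by auto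
    thus ?thesis using le2 True by fastforce
  next
    case False
    hence tp: "t > 0" using t by simp
    have "(b_L p - (1 + t) * b_L q1) / t \<le> b_L q2" unfolding b_L_eq(1)[of q2]
    proof (rule cInf_greatest[OF ne2])
      fix s2 assume "s2 \<in> bLset q2"
      from le2[OF this] show "(b_L p - (1 + t) * b_L q1) / t \<le> s2" using tp by (simp add: divide_le_eq algebra_simps)
    qed
    thus ?thesis using tp by (simp add: divide_le_eq algebra_simps)
  qed
qed



lemma quantum_ns: assumes "quantum_box q" shows "no_signalling q"
proof -
  obtain dA dB \<rho> M N where R: "density (dA * dB) \<rho>" and M: "povm dA M" and N: "povm dB N"
    and e: "\<forall>a b x y. complex_of_real (q a b x y) = mtrace (kron dA dB (M x a) (N y b) * \<rho>)"
    using assms unfolding quantum_box_def realizes_def by blast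
  have "q = (\<lambda>a b x y. Re (mtrace (kron dA dB (M x a) (N y b) * \<rho>)))"
    using e by (intro ext) (metis Re_complex_of_real)
  thus ?thesis using qbox(2)[OF M N R] by simp
qed

lemma Bval_lin: assumes "\<forall>a b x y. p a b x y = (1 + t) * q1 a b x y - t * q2 a b x y"
  shows "Bval B p = (1 + t) * Bval B q1 - t * Bval B q2"
proof -
  have "p = (\<lambda>a b x y. (1 + t) * q1 a b x y - t * q2 a b x y)" using assms by (intro ext) simp
  thus ?thesis unfolding Bval_def
    by (simp add: sum_distrib_left sum_subtractf right_diff_distrib mult.left_commute)
qed

lemma Bval_bound: assumes ns: "no_signalling q"
  shows "\<bar>Bval B q\<bar> \<le> (\<Sum>a\<in>UNIV. \<Sum>b\<in>UNIV. \<Sum>x\<in>UNIV. \<Sum>y\<in>UNIV. \<bar>B a b x y\<bar>)"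
proof -
  have "\<bar>Bval B q\<bar> \<le> (\<Sum>a\<in>UNIV. \<Sum>b\<in>UNIV. \<Sum>x\<in>UNIV. \<Sum>y\<in>UNIV. \<bar>B a b x y * q a b x y\<bar>)"
    unfolding Bval_def
    by (rule order_trans[OF sum_abs], rule sum_mono, rule order_trans[OF sum_abs], rule sum_mono,
        rule order_trans[OF sum_abs], rule sum_mono, rule sum_abs)
  also have "\<dots> \<le> (\<Sum>a\<in>UNIV. \<Sum>b\<in>UNIV. \<Sum>x\<in>UNIV. \<Sum>y\<in>UNIV. \<bar>B a b x y\<bar>)"
  proof (intro sum_mono)
    fix a b x y
    have "\<bar>q a b x y\<bar> \<le> 1" using ns_bounds(1,2)[OF ns, of a b x y] by simp
    thus "\<bar>B a b x y * q a b x y\<bar> \<le> \<bar>B a b x y\<bar>" by (simp add: abs_mult mult_left_le)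
  qed
  finally show ?thesis .
qed

definition good :: "real \<Rightarrow> ('a::finite \<Rightarrow> 'b::finite \<Rightarrow> 'x::finite \<Rightarrow> 'y::finite \<Rightarrow> real) \<Rightarrow> bool" where
  "good X p \<longleftrightarrow> (\<forall>t q1 q2. t \<ge> 0 \<and> quantum_box q1 \<and> quantum_box q2 \<and>
     (\<forall>a b x y. p a b x y = (1 + t) * q1 a b x y - t * q2 a b x y) \<longrightarrow> X \<le> 1 + 2 * t)"

lemma divide_bound: fixes X Y s :: real assumes "X \<le> s * Y" "0 \<le> Y" "0 \<le> X" "0 \<le> s"
  shows "X / Y \<le> s"
proof (cases "Y = 0")
  case True thus ?thesis using assms by simp
next
  case False thus ?thesis using assms by (simp add: divide_le_eq)
qed

lemma good_B: fixes p :: "'a::finite \<Rightarrow> 'b::finite \<Rightarrow> 'x::finite \<Rightarrow> 'y::finite \<Rightarrow> real"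
  shows "good (\<bar>Bval B p\<bar> / Sup ((\<lambda>q. \<bar>Bval B q\<bar>) ` {q. quantum_box q})) p"
  unfolding good_def
proof (intro allI impI, elim conjE)
  fix t q1 q2 assume t: "t \<ge> 0" and Q1: "quantum_box q1" and Q2: "quantum_box q2"
    and pe: "\<forall>a b x y. p a b x y = (1 + t) * q1 a b x y - t * q2 a b x y"
  let ?S = "(\<lambda>q. \<bar>Bval B q\<bar>) ` {q. quantum_box (q :: 'a \<Rightarrow> 'b \<Rightarrow> 'x \<Rightarrow> 'y \<Rightarrow> real)}"
  have bdd: "bdd_above ?S"
    by (rule bdd_aboveI[where M="\<Sum>a\<in>UNIV. \<Sum>b\<in>UNIV. \<Sum>x\<in>UNIV. \<Sum>y\<in>UNIV. \<bar>B a b x y\<bar>"])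
       (auto intro: Bval_bound quantum_ns)
  have u1: "\<bar>Bval B q1\<bar> \<le> Sup ?S" using Q1 by (intro cSup_upper[OF _ bdd]) auto
  have u2: "\<bar>Bval B q2\<bar> \<le> Sup ?S" using Q2 by (intro cSup_upper[OF _ bdd]) auto
  have S0: "0 \<le> Sup ?S" using u1 by (meson abs_ge_zero order_trans)
  have "\<bar>Bval B p\<bar> \<le> (1 + t) * \<bar>Bval B q1\<bar> + t * \<bar>Bval B q2\<bar>"
  proof -
    have "\<bar>(1 + t) * Bval B q1 - t * Bval B q2\<bar> \<le> \<bar>(1 + t) * Bval B q1\<bar> + \<bar>t * Bval B q2\<bar>"
      by (rule abs_triangle_ineq4)
    thus ?thesis unfolding Bval_lin[OF pe] using t by (simp add: abs_mult)
  qed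
  also have "\<dots> \<le> (1 + t) * Sup ?S + t * Sup ?S"
    using u1 u2 t by (intro add_mono mult_left_mono) auto
  finally have "\<bar>Bval B p\<bar> \<le> (1 + 2 * t) * Sup ?S" by (simp add: algebra_simps)
  thus "\<bar>Bval B p\<bar> / Sup ?S \<le> 1 + 2 * t" using S0 t by (intro divide_bound) auto
qed

lemma good_bL: fixes p :: "'a::finite \<Rightarrow> 'b::finite \<Rightarrow> 'x::finite \<Rightarrow> 'y::finite \<Rightarrow> real"
  shows "good (b_L p / Sup (b_L ` {q :: 'a \<Rightarrow> 'b \<Rightarrow> 'x \<Rightarrow> 'y \<Rightarrow> real. quantum_box q})) p"
  unfolding good_def
proof (intro allI impI, elim conjE)
  fix t q1 q2 assume t: "t \<ge> 0" and Q1: "quantum_box q1" and Q2: "quantum_box q2"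
    and pe: "\<forall>a b x y. p a b x y = (1 + t) * q1 a b x y - t * q2 a b x y"
  let ?S = "b_L ` {q :: 'a \<Rightarrow> 'b \<Rightarrow> 'x \<Rightarrow> 'y \<Rightarrow> real. quantum_box q}"
  have bdd: "bdd_above ?S"
    by (rule bdd_aboveI[where M="4 * real (card (UNIV :: (('x \<times> 'a) \<times> ('y \<times> 'b)) set))"])
       (auto intro: bL_props(3) quantum_ns)
  have ns1: "no_signalling q1" and ns2: "no_signalling q2" using Q1 Q2 by (auto intro: quantum_ns)
  have u1: "b_L q1 \<le> Sup ?S" using Q1 by (intro cSup_upper[OF _ bdd]) auto
  have u2: "b_L q2 \<le> Sup ?S" using Q2 by (intro cSup_upper[OF _ bdd]) auto
  have S0: "1 \<le> Sup ?S" using u1 bL_props(2)[OF ns1] by linarith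
  have "b_L p \<le> (1 + t) * b_L q1 + t * b_L q2" by (rule bL_comb[OF t pe ns1 ns2])
  also have "\<dots> \<le> (1 + t) * Sup ?S + t * Sup ?S"
    using u1 u2 t by (intro add_mono mult_left_mono) auto
  finally have le: "b_L p \<le> (1 + 2 * t) * Sup ?S" by (simp add: algebra_simps)
  have "0 \<le> b_L p"
  proof -
    have "(1 + t) * b_L q1 + t * b_L q2 \<ge> 0" using t bL_props(2)[OF ns1] bL_props(2)[OF ns2] by simp
    have "b_L p \<ge> 0" unfolding b_L_eq
    proof -
      obtain s1 s2 where "s1 \<in> bLset q1" "s2 \<in> bLset q2" using bL_props(1)[OF ns1] bL_props(1)[OF ns2] by blast
      from bLset_comb[OF t pe this] have "bLset p \<noteq> {}" by auto
      thus "0 \<le> Inf (bLset p)" using bLset_nonneg by (intro cInf_greatest) auto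
    qed
    thus ?thesis .
  qed
  thus "b_L p / Sup ?S \<le> 1 + 2 * t" using le S0 t by (intro divide_bound) auto
qed

lemma good_apply: assumes g: "good X p" and re: "realizes dA dB Op p"
  and Opc: "Op \<in> carrier_mat (dA*dB) (dA*dB)"
  and R1: "density (dA*dB) \<rho>1" and R2: "density (dA*dB) \<rho>2" and t: "t \<ge> 0"
  and eq: "\<forall>i<dA*dB. \<forall>j<dA*dB. Op $$ (i,j) = complex_of_real (1 + t) * \<rho>1 $$ (i,j) - complex_of_real t * \<rho>2 $$ (i,j)"
  shows "X \<le> 1 + 2 * t"
  using core[OF re Opc R1 R2 t eq] g t unfolding good_def by blast

lemma tn_lower: assumes g: "good X p" and ps: "pseudo_state (dA * dB) Op" and re: "realizes dA dB Op p"
  shows "X \<le> trace_norm Op"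
proof -
  obtain t \<rho>1 \<rho>2 where d: "t \<ge> 0" "density (dA*dB) \<rho>1" "density (dA*dB) \<rho>2"
    "\<forall>i<dA*dB. \<forall>j<dA*dB. Op $$ (i,j) = complex_of_real (1 + t) * \<rho>1 $$ (i,j) - complex_of_real t * \<rho>2 $$ (i,j)"
    "trace_norm Op = 1 + 2 * t" using pseudo_decomp[OF ps] by blast
  have Opc: "Op \<in> carrier_mat (dA*dB) (dA*dB)" using ps unfolding pseudo_state_def hermitian_def by auto
  show ?thesis using good_apply[OF g re Opc d(2,3,1,4)] d(5) by simp
qed

lemma rDop_lower: assumes g: "good X p" and ps: "pseudo_state (dA * dB) Op" and re: "realizes dA dB Op p"
  shows "(X - 1) / 2 \<le> r_D_op (dA * dB) Op"
proof -
  let ?n = "dA * dB"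
  let ?T = "{t. 0 \<le> t \<and> (\<exists>\<rho>'. density ?n \<rho>' \<and> density ?n ((1 / (1 + complex_of_real t)) \<cdot>\<^sub>m (Op + complex_of_real t \<cdot>\<^sub>m \<rho>')))}"
  have Opc: "Op \<in> carrier_mat ?n ?n" using ps unfolding pseudo_state_def hermitian_def by auto
  have dc: "density ?n \<rho> \<Longrightarrow> \<rho> \<in> carrier_mat ?n ?n" for \<rho> unfolding density_def psd_def hermitian_def by auto
  obtain t0 \<rho>1 \<rho>2 where d: "t0 \<ge> 0" "density ?n \<rho>1" "density ?n \<rho>2"
    "\<forall>i<?n. \<forall>j<?n. Op $$ (i,j) = complex_of_real (1 + t0) * \<rho>1 $$ (i,j) - complex_of_real t0 * \<rho>2 $$ (i,j)"
    using pseudo_decomp[OF ps] by blast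
  have "(1 / (1 + complex_of_real t0)) \<cdot>\<^sub>m (Op + complex_of_real t0 \<cdot>\<^sub>m \<rho>2) = \<rho>1"
  proof (rule eq_matI)
    fix i j assume "i < dim_row \<rho>1" "j < dim_col \<rho>1"
    hence ij: "i < ?n" "j < ?n" using dc[OF d(2)] by auto
    have nz: "1 + complex_of_real t0 \<noteq> 0" using d(1)
      by (metis add_nonneg_eq_0_iff of_real_1 of_real_add of_real_eq_0_iff zero_le_one one_neq_zero)
    show "((1 / (1 + complex_of_real t0)) \<cdot>\<^sub>m (Op + complex_of_real t0 \<cdot>\<^sub>m \<rho>2)) $$ (i,j) = \<rho>1 $$ (i,j)"
      using ij Opc dc[OF d(3)] d(4) nz by (simp add: field_simps)
  qed (use Opc dc[OF d(2)] dc[OF d(3)] in auto)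
  hence t0T: "t0 \<in> ?T" using d by auto
  have "(X - 1) / 2 \<le> Inf ?T"
  proof (rule cInf_greatest)
    show "?T \<noteq> {}" using t0T by blast
  next
    fix t assume "t \<in> ?T"
    then obtain \<rho>' where t: "t \<ge> 0" and R': "density ?n \<rho>'"
      and R: "density ?n ((1 / (1 + complex_of_real t)) \<cdot>\<^sub>m (Op + complex_of_real t \<cdot>\<^sub>m \<rho>'))" by blast
    let ?\<rho> = "(1 / (1 + complex_of_real t)) \<cdot>\<^sub>m (Op + complex_of_real t \<cdot>\<^sub>m \<rho>')"
    have nz: "1 + complex_of_real t \<noteq> 0" using t
      by (metis add_nonneg_eq_0_iff of_real_1 of_real_add of_real_eq_0_iff zero_le_one one_neq_zero)
    have "\<forall>i<?n. \<forall>j<?n. Op $$ (i,j) = complex_of_real (1 + t) * ?\<rho> $$ (i,j) - complex_of_real t * \<rho>' $$ (i,j)"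
      using Opc dc[OF R'] nz by (auto simp: field_simps)
    from good_apply[OF g re Opc R R' t this] show "(X - 1) / 2 \<le> t" by simp
  qed
  thus ?thesis unfolding r_D_op_def .
qed

lemma rD_lower: fixes p :: "'a::finite \<Rightarrow> 'b::finite \<Rightarrow> 'x::finite \<Rightarrow> 'y::finite \<Rightarrow> real"
  assumes ns: "no_signalling p" and g: "good X p"
  shows "(X - 1) / 2 \<le> r_D_box p"
  unfolding r_D_box_def
proof (rule cInf_greatest)
  show "{r_D_op (dA * dB) Op |dA dB Op. pseudo_state (dA * dB) Op \<and> realizes dA dB Op p} \<noteq> {}"
    using realize_ns[OF ns] by blast
next
  fix r assume "r \<in> {r_D_op (dA * dB) Op |dA dB Op. pseudo_state (dA * dB) Op \<and> realizes dA dB Op p}"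
  then obtain dA dB Op where "r = r_D_op (dA * dB) Op" "pseudo_state (dA * dB) Op" "realizes dA dB Op p" by blast
  thus "(X - 1) / 2 \<le> r" using rDop_lower[OF g] by simp
qed

theorem proposition2:
  fixes p :: "'a::finite \<Rightarrow> 'b::finite \<Rightarrow> 'x::finite \<Rightarrow> 'y::finite \<Rightarrow> real"
  assumes "no_signalling p"
  shows "(\<forall>B :: 'a \<Rightarrow> 'b \<Rightarrow> 'x \<Rightarrow> 'y \<Rightarrow> real.
            (\<forall>pL. local_box pL \<longrightarrow> \<bar>Bval B pL\<bar> \<le> 1) \<longrightarrow>
            (let BQ = Sup ((\<lambda>q. \<bar>Bval B q\<bar>) ` {q. quantum_box q}) in
               (\<bar>Bval B p\<bar> / BQ - 1) / 2 \<le> r_D_box p \<and>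
               (\<forall>dA dB Op. pseudo_state (dA * dB) Op \<and> realizes dA dB Op p \<longrightarrow>
                  \<bar>Bval B p\<bar> / BQ \<le> trace_norm Op)))
       \<and> (let bQ = Sup (b_L ` {q :: 'a \<Rightarrow> 'b \<Rightarrow> 'x \<Rightarrow> 'y \<Rightarrow> real. quantum_box q}) in
               (b_L p / bQ - 1) / 2 \<le> r_D_box p \<and>
               (\<forall>dA dB Op. pseudo_state (dA * dB) Op \<and> realizes dA dB Op p \<longrightarrow>
                  b_L p / bQ \<le> trace_norm Op))"
  using rD_lower[OF assms good_B] tn_lower[OF good_B] rD_lower[OF assms good_bL] tn_lower[OF good_bL]
  unfolding Let_def by blast


end
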